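(* Assume $\ell$ is bounded. Let $C_1,C_2>0$. Define $\bar L^+_i=\ell(W,\widetilde{Z}^{i,0}_{1,\overline{U}^{i,0}_1})$, $L^{i+}_j=\ell(W,\widetilde{Z}^{i,V_i}_{j,0})$, and the shifted Rademacher variables $\tilde\varepsilon_i=(-1)^{\overline{V}_i}-\frac{C_1}{C_1+2}$ and $\tilde\varepsilon^{i,V_i}_j=(-1)^{\overline{U}^{i,V_i}_j}-\frac{C_2}{C_2+2}$. Then $$\mathbb{E}[L_{\mathcal{D}}(W)]-(1+C_1)\mathbb{E}[L_{\mu_{[K]}}(W)]=\frac{2+C_1}{K}\sum_{i=1}^K\mathbb{E}\big[\tilde\varepsilon_i\bar L^+_i\big],$$ $$\mathbb{E}[L_{\mu_{[K]}}(W)]-(1+C_2)\mathbb{E}[L_S(W)]=\frac{2+C_2}{Kn}\sum_{i=1}^K\sum_{j=1}^n\mathbb{E}\big[\tilde\varepsilon^{i,V_i}_jL^{i+}_j\big].$$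
   Context: Setting. $\mathcal{Z}$ is an instance space, $\mathcal{W}$ a hypothesis space, $\mathcal{C}$ a set of clients; each client $c\in\mathcal{C}$ has a data distribution $\mu_c$ on $\mathcal{Z}$, and $\mathcal{D}$ is a probability distribution on $\mathcal{C}$ (so a draw from $\mathcal{D}$ yields a data distribution on $\mathcal{Z}$). A loss $\ell:\mathcal{W}\times\mathcal{Z}\to[0,\infty)$ is given. There are $K$ participating clients, each with $n$ training points. A federated learning (FL) algorithm $\mathcal{A}$ is a conditional distribution $P_{W|S}$ mapping the collective training sample $S=(S_1,\dots,S_K)\in\mathcal{Z}^{nK}$ to a hypothesis $W\in\mathcal{W}$. Superclient/supersample construction. Let $\tilde\mu=(\tilde\mu_{i,b})_{i\in[K],b\in\{0,1\}}$ have i.i.d. entries drawn from $\mathcal{D}$. Conditionally on $\tilde\mu$, for each $(i,b)$ let $\widetilde{Z}^{i,b}=(\widetilde{Z}^{i,b}_{j,c})_{j\in[n],c\in\{0,1\}}$ have i.i.d. entries drawn from $\tilde\mu_{i,b}$, independently over $(i,b)$. Let $V=(V_1,\dots,V_K)$ and $U^{i,b}=(U^{i,b}_j)_{j\in[n]}$ ($i\in[K]$, $b\in\{0,1\}$) be mutually independent $\mathrm{Unif}\{0,1\}$ random variables, independent of $(\tilde\mu,\widetilde{Z})$. Write $\overline{V}_i=1-V_i$, $\overline{U}^{i,b}_j=1-U^{i,b}_j$. The $i$-th participating client distribution is $\mu_i=\tilde\mu_{i,V_i}$ and its training set is $S_i=(Z_{i,1},\dots,Z_{i,n})$ with $Z_{i,j}=\widetilde{Z}^{i,V_i}_{j,U^{i,V_i}_j}$;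 $S=(S_1,\dots,S_K)$. Given all of these variables, $W\sim P_{W|S}$. Risks. $L_{\mathcal{D}}(w)=\mathbb{E}_{\mu\sim\mathcal{D}}\mathbb{E}_{Z\sim\mu}\ell(w,Z)$; $L_{\mu_i}(w)=\mathbb{E}_{Z\sim\mu_i}\ell(w,Z)$; $L_{\mu_{[K]}}(w)=\frac1K\sum_{i=1}^K L_{\mu_i}(w)$; $L_S(w)=\frac{1}{Kn}\sum_{i=1}^K\sum_{j=1}^n\ell(w,Z_{i,j})$. *)

theory Defs
  imports "HOL-Probability.Probability"
begin

text \<open>Bits b, c, V_i, U^{i,b}_j in {0,1} are encoded as bool (True = 1).
  Indices i in [K] and j in [n] are 0-based: i < K, j < n.\<close>

definition coin :: "bool measure" where
  "coin = measure_pmf (pmf_of_set (UNIV :: bool set))"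

definition clientIdx :: "nat \<Rightarrow> (nat \<times> bool) set" where
  "clientIdx K = {..<K} \<times> UNIV"

definition zIdx :: "nat \<Rightarrow> nat \<Rightarrow> (nat \<times> bool \<times> nat \<times> bool) set" where
  "zIdx K n = {..<K} \<times> UNIV \<times> {..<n} \<times> UNIV"

definition uIdx :: "nat \<Rightarrow> nat \<Rightarrow> (nat \<times> bool \<times> nat) set" where
  "uIdx K n = {..<K} \<times> UNIV \<times> {..<n}"

definition sIdx :: "nat \<Rightarrow> nat \<Rightarrow> (nat \<times> nat) set" where
  "sIdx K n = {..<K} \<times> {..<n}"

definition sample_of ::
  "nat \<Rightarrow> nat \<Rightarrow> (nat \<times> bool \<times> nat \<times> bool \<Rightarrow> 'z) \<Rightarrow> (nat \<Rightarrow> bool)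
     \<Rightarrow> (nat \<times> bool \<times> nat \<Rightarrow> bool) \<Rightarrow> (nat \<times> nat \<Rightarrow> 'z)" where
  "sample_of K n zt v u = restrict (\<lambda>(i, j). zt (i, v i, j, u (i, v i, j))) (sIdx K n)"

definition outM :: "'c measure \<Rightarrow> 'z measure \<Rightarrow> 'w measure \<Rightarrow> nat \<Rightarrow> nat \<Rightarrow>
   ((nat \<times> bool \<Rightarrow> 'c) \<times> (nat \<times> bool \<times> nat \<times> bool \<Rightarrow> 'z) \<times> (nat \<Rightarrow> bool)
     \<times> (nat \<times> bool \<times> nat \<Rightarrow> bool) \<times> 'w) measure" where
  "outM D Zm Wm K n =
     PiM (clientIdx K) (\<lambda>_. D) \<Otimes>\<^sub>M PiM (zIdx K n) (\<lambda>_. Zm) \<Otimes>\<^sub>M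
     PiM {..<K} (\<lambda>_. coin) \<Otimes>\<^sub>M PiM (uIdx K n) (\<lambda>_. coin) \<Otimes>\<^sub>M Wm"

text \<open>Joint law of the superclient/supersample construction together with W ~ P_{W|S}:
  mutilde_{i,b} iid D; given mutilde, Ztilde^{i,b}_{j,c} independent with law mu(mutilde_{i,b});
  V, U independent uniform bits; W drawn from the algorithm kernel A at S.\<close>
definition fl_joint :: "'c measure \<Rightarrow> ('c \<Rightarrow> 'z measure) \<Rightarrow> 'z measure \<Rightarrow> 'w measure
   \<Rightarrow> ((nat \<times> nat \<Rightarrow> 'z) \<Rightarrow> 'w measure) \<Rightarrow> nat \<Rightarrow> nat \<Rightarrow>
   ((nat \<times> bool \<Rightarrow> 'c) \<times> (nat \<times> bool \<times> nat \<times> bool \<Rightarrow> 'z) \<times> (nat \<Rightarrow> bool)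
     \<times> (nat \<times> bool \<times> nat \<Rightarrow> bool) \<times> 'w) measure" where
  "fl_joint D mu Zm Wm A K n =
     bind (PiM (clientIdx K) (\<lambda>_. D)) (\<lambda>mt.
     bind (PiM (zIdx K n) (\<lambda>(i, b, j, c). mu (mt (i, b)))) (\<lambda>zt.
     bind (PiM {..<K} (\<lambda>_. coin)) (\<lambda>v.
     bind (PiM (uIdx K n) (\<lambda>_. coin)) (\<lambda>u.
     bind (A (sample_of K n zt v u)) (\<lambda>w.
     return (outM D Zm Wm K n) (mt, zt, v, u, w))))))"

definition risk :: "'z measure \<Rightarrow> ('w \<Rightarrow> 'z \<Rightarrow> real) \<Rightarrow> 'w \<Rightarrow> real" where
  "risk m loss w = (\<integral>z. loss w z \<partial>m)"

definition pop_risk :: "'c measure \<Rightarrow> ('c \<Rightarrow> 'z measure) \<Rightarrow> ('w \<Rightarrow> 'z \<Rightarrow> real) \<Rightarrow> 'w \<Rightarrow> real" where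
  "pop_risk D mu loss w = (\<integral>c. risk (mu c) loss w \<partial>D)"

definition emp_risk :: "nat \<Rightarrow> nat \<Rightarrow> ('w \<Rightarrow> 'z \<Rightarrow> real) \<Rightarrow> (nat \<times> nat \<Rightarrow> 'z) \<Rightarrow> 'w \<Rightarrow> real" where
  "emp_risk K n loss s w = (1 / (real K * real n)) * (\<Sum>i<K. \<Sum>j<n. loss w (s (i, j)))"

end

theory Submission
  imports Defs
begin


lemma sets_coin[simp]: "sets coin = UNIV" and space_coin[simp]: "space coin = UNIV"
  unfolding coin_def by simp_all

lemma prob_space_coin[simp]: "prob_space coin" unfolding coin_def by (rule prob_space_measure_pmf)

lemma measurable_coin_dom[measurable]: "f \<in> coin \<rightarrow>\<^sub>M count_space UNIV"
  by (simp add: measurable_cong_sets[of coin "count_space UNIV" N N for N, OF _ refl])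

lemma measurable_kernel_integral[measurable (raw)]:
  fixes f :: "'a \<Rightarrow> 'b \<Rightarrow> real"
  assumes L: "L \<in> M \<rightarrow>\<^sub>M subprob_algebra N"
    and f: "(\<lambda>(x,y). f x y) \<in> borel_measurable (M \<Otimes>\<^sub>M N)"
  shows "(\<lambda>x. \<integral>y. f x y \<partial>L x) \<in> borel_measurable M"
proof -
  have eq: "(\<integral>y. f x y \<partial>L x) = (if (\<integral>\<^sup>+y. ennreal (norm (f x y)) \<partial>L x) < \<infinity>
      then enn2real (\<integral>\<^sup>+y. ennreal (f x y) \<partial>L x) - enn2real (\<integral>\<^sup>+y. ennreal (- f x y) \<partial>L x) else 0)"
    if x: "x \<in> space M" for x
  proof -
    have sets: "sets (L x) = sets N" using sets_kernel[OF L x] .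
    have "f x \<in> borel_measurable N" using measurable_Pair2[OF f x] by simp
    then have fm: "f x \<in> borel_measurable (L x)" by (simp add: measurable_cong_sets[OF sets refl])
    have iff: "integrable (L x) (f x) \<longleftrightarrow> (\<integral>\<^sup>+y. ennreal (norm (f x y)) \<partial>L x) < \<infinity>"
      using fm by (simp add: integrable_iff_bounded)
    show ?thesis
    proof (cases "integrable (L x) (f x)")
      case True
      then show ?thesis using iff by (simp add: real_lebesgue_integral_def)
    next
      case False
      then show ?thesis using iff by (simp add: not_integrable_integral_eq)
    qed
  qed
  have m1: "(\<lambda>x. \<integral>\<^sup>+y. ennreal (norm (f x y)) \<partial>L x) \<in> borel_measurable M"
    by (rule nn_integral_measurable_subprob_algebra2[OF _ L]) (use f in measurable)
  have m2: "(\<lambda>x. \<integral>\<^sup>+y. ennreal (f x y) \<partial>L x) \<in> borel_measurable M"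
    by (rule nn_integral_measurable_subprob_algebra2[OF _ L]) (use f in measurable)
  have m3: "(\<lambda>x. \<integral>\<^sup>+y. ennreal (- f x y) \<partial>L x) \<in> borel_measurable M"
    by (rule nn_integral_measurable_subprob_algebra2[OF _ L]) (use f in measurable)
  note [measurable] = m1 m2 m3
  show ?thesis
    by (subst measurable_cong[OF eq]) (assumption, measurable)
qed

definition wrapM :: "'i set \<Rightarrow> ('i \<Rightarrow> 'a measure) \<Rightarrow> 'i \<Rightarrow> 'a measure" where
  "wrapM I M i = (if i \<in> I then M i else return (count_space UNIV) undefined)"

lemma wrapM_pps: "(\<And>i. i \<in> I \<Longrightarrow> prob_space (M i)) \<Longrightarrow> product_prob_space (wrapM I M)"
  unfolding product_prob_space_def product_prob_space_axioms_def product_sigma_finite_def wrapM_def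
  by (auto intro!: prob_space_imp_sigma_finite prob_space_return)

lemma PiM_wrapM: "J \<subseteq> I \<Longrightarrow> PiM J (wrapM I M) = PiM J M"
  by (rule PiM_cong) (auto simp: wrapM_def)

lemma emeasure_PiM_prob:
  assumes "finite I" "\<And>i. i \<in> I \<Longrightarrow> prob_space (M i)" "\<And>i. i \<in> I \<Longrightarrow> X i \<in> sets (M i)"
  shows "emeasure (PiM I M) (Pi\<^sub>E I X) = (\<Prod>i\<in>I. emeasure (M i) (X i))"
proof -
  interpret product_prob_space "wrapM I M" using wrapM_pps assms(2) .
  have "emeasure (PiM I (wrapM I M)) (Pi\<^sub>E I X) = (\<Prod>i\<in>I. emeasure (wrapM I M i) (X i))"
    using assms by (intro emeasure_PiM) (auto simp: wrapM_def)
  then show ?thesis using PiM_wrapM[of I I M] by (simp add: wrapM_def)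
qed

lemma prob_integrable_bound:
  fixes f :: "'a \<Rightarrow> real"
  assumes M: "prob_space M" and f: "f \<in> borel_measurable M" and b: "\<And>x. x \<in> space M \<Longrightarrow> \<bar>f x\<bar> \<le> C"
  shows "integrable M f"
proof -
  interpret prob_space M by fact
  show ?thesis by (rule integrable_const_bound[where B=C]) (use b f in auto)
qed

lemma prob_integral_bound:
  fixes f :: "'a \<Rightarrow> real"
  assumes M: "prob_space M" and f: "f \<in> borel_measurable M" and b: "\<And>x. x \<in> space M \<Longrightarrow> \<bar>f x\<bar> \<le> C"
  shows "\<bar>\<integral>x. f x \<partial>M\<bar> \<le> C"
proof -
  interpret prob_space M by fact
  have i: "integrable M f" using prob_integrable_bound[OF M f b] .
  have "(\<integral>x. f x \<partial>M) \<le> C"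
  proof (rule integral_le_const[OF i], intro AE_I2)
    fix x assume "x \<in> space M" from b[OF this] show "f x \<le> C" by linarith
  qed
  moreover have "- C \<le> (\<integral>x. f x \<partial>M)"
  proof (rule integral_ge_const[OF i], intro AE_I2)
    fix x assume "x \<in> space M" from b[OF this] show "- C \<le> f x" by linarith
  qed
  ultimately show ?thesis by simp
qed

lemma swap_int:
  fixes f :: "'a \<Rightarrow> 'b \<Rightarrow> real"
  assumes M1: "prob_space M1" and M2: "prob_space M2"
    and f: "(\<lambda>(x,y). f x y) \<in> borel_measurable (M1 \<Otimes>\<^sub>M M2)"
    and b: "\<And>x y. x \<in> space M1 \<Longrightarrow> y \<in> space M2 \<Longrightarrow> \<bar>f x y\<bar> \<le> C"
  shows "(\<integral>x. \<integral>y. f x y \<partial>M2 \<partial>M1) = (\<integral>y. \<integral>x. f x y \<partial>M1 \<partial>M2)"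
proof -
  interpret pair_prob_space M1 M2
    using M1 M2 by (simp add: pair_prob_space_def pair_sigma_finite_def prob_space_imp_sigma_finite)
  have "integrable (M1 \<Otimes>\<^sub>M M2) (\<lambda>(x,y). f x y)"
    by (rule prob_integrable_bound[OF prob_space_pair[OF M1 M2] f]) (use b in \<open>auto simp: space_pair_measure\<close>)
  from Fubini_integral[OF this] show ?thesis by simp
qed

lemma restrict_int:
  fixes H :: "_ \<Rightarrow> real"
  assumes fin: "finite I" and J: "J \<subseteq> I" and prob: "\<And>i. i \<in> I \<Longrightarrow> prob_space (M i)"
    and H: "H \<in> borel_measurable (PiM J M)"
    and inv: "\<And>x. x \<in> space (PiM I M) \<Longrightarrow> H (restrict x J) = H x"
  shows "(\<integral>x. H x \<partial>PiM I M) = (\<integral>x. H x \<partial>PiM J M)"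
proof -
  interpret product_prob_space "wrapM I M" using wrapM_pps prob .
  have "distr (PiM I (wrapM I M)) (PiM J (wrapM I M)) (\<lambda>x. restrict x J) = PiM J (wrapM I M)"
    by (rule distr_PiM_restrict_finite) (use fin J finite_subset in auto)
  then have d: "distr (PiM I M) (PiM J M) (\<lambda>x. restrict x J) = PiM J M"
    using PiM_wrapM[OF J, of M] PiM_wrapM[of I I M] by simp
  have "(\<integral>x. H x \<partial>PiM J M) = (\<integral>x. H (restrict x J) \<partial>PiM I M)"
    by (subst d[symmetric], rule integral_distr) (use J H measurable_restrict_subset in auto)
  also have "\<dots> = (\<integral>x. H x \<partial>PiM I M)"
    by (rule Bochner_Integration.integral_cong[OF refl]) (use inv in auto)
  finally show ?thesis by simp
qed

lemma resample:
  fixes g :: "('i \<Rightarrow> 'a) \<Rightarrow> 'a \<Rightarrow> real"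
  assumes fin: "finite I" and k: "k \<in> I" and prob: "\<And>i. i \<in> I \<Longrightarrow> prob_space (M i)"
    and gm: "(\<lambda>(x,y). g x y) \<in> borel_measurable (PiM I M \<Otimes>\<^sub>M M k)"
    and gb: "\<And>x y. x \<in> space (PiM I M) \<Longrightarrow> y \<in> space (M k) \<Longrightarrow> \<bar>g x y\<bar> \<le> C"
    and inv: "\<And>x y y'. x \<in> space (PiM I M) \<Longrightarrow> y \<in> space (M k) \<Longrightarrow> y' \<in> space (M k) \<Longrightarrow> g (x(k:=y')) y = g x y"
  shows "(\<integral>x. g x (x k) \<partial>PiM I M) = (\<integral>x. \<integral>y. g x y \<partial>M k \<partial>PiM I M)"
proof -
  interpret product_prob_space "wrapM I M" using wrapM_pps prob .
  have Mk: "prob_space (M k)" using prob k .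
  have Ieq: "insert k (I - {k}) = I" using k by auto
  have PI: "PiM I (wrapM I M) = PiM I M" using PiM_wrapM[of I I M] by simp
  have PJ: "PiM (I - {k}) (wrapM I M) = PiM (I - {k}) M" using PiM_wrapM[of "I - {k}" I M] by auto
  have wk: "wrapM I M k = M k" using k by (simp add: wrapM_def)
  have upd: "x(k := y) \<in> space (PiM I M)" if "x \<in> space (PiM (I - {k}) M)" "y \<in> space (M k)" for x y
    using that k by (auto simp: space_PiM PiE_iff extensional_def split: if_splits)
  have m1: "(\<lambda>x. g x (x k)) \<in> borel_measurable (PiM I M)"
    using measurable_compose[OF measurable_Pair[OF measurable_ident_sets[OF refl] measurable_component_singleton[OF k]] gm]
    by simp
  have m2: "(\<lambda>x. \<integral>y. g x y \<partial>M k) \<in> borel_measurable (PiM I M)"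
  proof (rule measurable_kernel_integral[where N = "M k"])
    show "(\<lambda>x. M k) \<in> PiM I M \<rightarrow>\<^sub>M subprob_algebra (M k)"
      by (rule measurable_const) (use Mk in \<open>auto simp: space_subprob_algebra prob_space_imp_subprob_space\<close>)
  qed (use gm in simp)
  have i1: "integrable (PiM (insert k (I - {k})) (wrapM I M)) (\<lambda>x. g x (x k))"
    unfolding Ieq PI by (rule prob_integrable_bound[OF prob_space_PiM[OF prob] m1]) (use gb measurable_space[OF measurable_component_singleton[OF k]] in auto)
  have i2: "integrable (PiM (insert k (I - {k})) (wrapM I M)) (\<lambda>x. \<integral>y. g x y \<partial>M k)"
    unfolding Ieq PI
  proof (rule prob_integrable_bound[OF _ m2, where C=C])
    show "prob_space (PiM I M)" by (rule prob_space_PiM) (rule prob)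
    fix x assume x: "x \<in> space (PiM I M)"
    have "g x \<in> borel_measurable (M k)" using measurable_Pair2[OF gm x] by simp
    then show "\<bar>\<integral>y. g x y \<partial>M k\<bar> \<le> C" by (rule prob_integral_bound[OF Mk]) (use gb x in auto)
  qed
  have "(\<integral>x. g x (x k) \<partial>PiM I M) = (\<integral>x. \<integral>y. g (x(k:=y)) y \<partial>M k \<partial>PiM (I - {k}) M)"
    using product_integral_insert[OF finite_Diff[OF fin] _ i1] PI PJ wk Ieq by simp
  also have "\<dots> = (\<integral>x. \<integral>y'. \<integral>y. g (x(k:=y')) y \<partial>M k \<partial>M k \<partial>PiM (I - {k}) M)"
  proof (rule Bochner_Integration.integral_cong[OF refl])
    fix x assume x: "x \<in> space (PiM (I - {k}) M)"
    have "(\<integral>y'. \<integral>y. g (x(k:=y')) y \<partial>M k \<partial>M k) = (\<integral>y'. (\<integral>y. g (x(k:=y)) y \<partial>M k) \<partial>M k)"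
    proof (rule Bochner_Integration.integral_cong[OF refl])
      fix y' assume y': "y' \<in> space (M k)"
      show "(\<integral>y. g (x(k:=y')) y \<partial>M k) = (\<integral>y. g (x(k:=y)) y \<partial>M k)"
      proof (rule Bochner_Integration.integral_cong[OF refl])
        fix y assume y: "y \<in> space (M k)"
        have "g ((x(k:=y))(k:=y')) y = g (x(k:=y)) y" by (rule inv[OF upd[OF x y] y y'])
        then show "g (x(k:=y')) y = g (x(k:=y)) y" by simp
      qed
    qed
    also have "\<dots> = (\<integral>y. g (x(k:=y)) y \<partial>M k)"
      using prob_space.prob_space[OF Mk] by simp
    finally show "(\<integral>y. g (x(k:=y)) y \<partial>M k) = (\<integral>y'. \<integral>y. g (x(k:=y')) y \<partial>M k \<partial>M k)" ..
  qed
  also have "\<dots> = (\<integral>x. \<integral>y. g x y \<partial>M k \<partial>PiM I M)"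
    using product_integral_insert[OF finite_Diff[OF fin] _ i2] PI PJ wk Ieq by simp
  finally show ?thesis .
qed

locale fl =
  fixes D :: "'c measure" and mu :: "'c \<Rightarrow> 'z measure" and Zm :: "'z measure"
    and Wm :: "'w measure" and A :: "(nat \<times> nat \<Rightarrow> 'z) \<Rightarrow> 'w measure"
    and loss :: "'w \<Rightarrow> 'z \<Rightarrow> real" and K n :: nat and B :: real
  assumes D: "prob_space D"
    and mu: "mu \<in> D \<rightarrow>\<^sub>M prob_algebra Zm"
    and A: "A \<in> PiM (sIdx K n) (\<lambda>_. Zm) \<rightarrow>\<^sub>M prob_algebra Wm"
    and loss: "case_prod loss \<in> borel_measurable (Wm \<Otimes>\<^sub>M Zm)"
    and nonneg: "\<And>w z. 0 \<le> loss w z"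
    and bnd: "\<And>w z. loss w z \<le> B"
    and Kpos: "0 < K" and npos: "0 < n"
begin

definition "P = PiM (clientIdx K) (\<lambda>_. D)"
definition "ZM = PiM (zIdx K n) (\<lambda>_. Zm)"
definition "Q mt = PiM (zIdx K n) (\<lambda>(i,b,j,c). mu (mt (i,b)))"
definition "Vm = PiM {..<K} (\<lambda>_. coin)"
definition "Um = PiM (uIdx K n) (\<lambda>_. coin)"
definition "SM = PiM (sIdx K n) (\<lambda>_. Zm)"
definition "OM = outM D Zm Wm K n"

lemma finite_idx[simp]: "finite (clientIdx K)" "finite (zIdx K n)" "finite (uIdx K n)" "finite (sIdx K n)"
  by (auto simp: clientIdx_def zIdx_def uIdx_def sIdx_def)

lemma mu_sub[measurable]: "mu \<in> D \<rightarrow>\<^sub>M subprob_algebra Zm" using measurable_prob_algebraD[OF mu] .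
lemma A_sub[measurable]: "A \<in> SM \<rightarrow>\<^sub>M subprob_algebra Wm" using measurable_prob_algebraD[OF A] by (simp add: SM_def)

lemma loss_m[measurable (raw)]:
  "f \<in> N \<rightarrow>\<^sub>M Wm \<Longrightarrow> g \<in> N \<rightarrow>\<^sub>M Zm \<Longrightarrow> (\<lambda>x. loss (f x) (g x)) \<in> borel_measurable N"
  using measurable_compose[OF measurable_Pair loss, of f N g] by simp

lemma mu_space: "c \<in> space D \<Longrightarrow> prob_space (mu c)" "c \<in> space D \<Longrightarrow> sets (mu c) = sets Zm"
  using measurable_space[OF mu, of c] by (simp_all add: space_prob_algebra)

lemma space_P_D: "mt \<in> space P \<Longrightarrow> i < K \<Longrightarrow> mt (i, b) \<in> space D"
  by (auto simp: P_def space_PiM clientIdx_def)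

lemma Q_sets: "mt \<in> space P \<Longrightarrow> sets (Q mt) = sets ZM"
  unfolding Q_def ZM_def
  by (rule sets_PiM_cong) (auto simp: zIdx_def mu_space space_P_D)

lemma Q_space: "mt \<in> space P \<Longrightarrow> space (Q mt) = space ZM"
  using Q_sets sets_eq_imp_space_eq by blast

lemma Q_prob: "mt \<in> space P \<Longrightarrow> prob_space (Q mt)"
  unfolding Q_def by (rule prob_space_PiM) (auto simp: zIdx_def mu_space space_P_D)

lemma Q_meas: "Q \<in> P \<rightarrow>\<^sub>M prob_algebra ZM"
proof (rule measurable_prob_algebra_generated[where \<Omega> = "space ZM" and G = "prod_algebra (zIdx K n) (\<lambda>_. Zm)"])
  show "sets ZM = sigma_sets (space ZM) (prod_algebra (zIdx K n) (\<lambda>_. Zm))"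
    unfolding ZM_def by (simp add: sets_PiM space_PiM)
  show "Int_stable (prod_algebra (zIdx K n) (\<lambda>_. Zm))" by (rule Int_stable_prod_algebra)
  show "prod_algebra (zIdx K n) (\<lambda>_. Zm) \<subseteq> Pow (space ZM)"
    unfolding ZM_def space_PiM by (rule prod_algebra_sets_into_space)
  show "prob_space (Q a)" if "a \<in> space P" for a using Q_prob that .
  show "sets (Q a) = sets ZM" if "a \<in> space P" for a using Q_sets that .
  fix X assume "X \<in> prod_algebra (zIdx K n) (\<lambda>_. Zm)"
  then obtain E where X: "X = Pi\<^sub>E (zIdx K n) E" and E: "E \<in> (\<Pi> i\<in>zIdx K n. sets Zm)"
    by (rule prod_algebraE_all)
  have eq: "emeasure (Q mt) X = (\<Prod>k\<in>zIdx K n. emeasure (mu (mt (fst k, fst (snd k)))) (E k))"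
    if mt: "mt \<in> space P" for mt
    unfolding X Q_def
    by (subst emeasure_PiM_prob) (use E mt in \<open>auto simp: zIdx_def mu_space space_P_D case_prod_beta\<close>)
  have m: "(\<lambda>mt. emeasure (mu (mt (fst k, fst (snd k)))) (E k)) \<in> borel_measurable P" if k: "k \<in> zIdx K n" for k
  proof -
    have "(fst k, fst (snd k)) \<in> clientIdx K" using k by (auto simp: zIdx_def clientIdx_def)
    then have "(\<lambda>mt. mt (fst k, fst (snd k))) \<in> P \<rightarrow>\<^sub>M D" unfolding P_def by measurable
    moreover have "E k \<in> sets Zm" using E k by auto
    ultimately show ?thesis
      by (intro measurable_compose[OF _ measurable_emeasure_subprob_algebra[of "E k" Zm]] measurable_compose[OF _ mu_sub])
  qed
  show "(\<lambda>a. emeasure (Q a) X) \<in> borel_measurable P"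
    by (subst measurable_cong[OF eq]) (auto intro!: borel_measurable_prod_ennreal m)
qed

lemma Q_sub[measurable]: "Q \<in> P \<rightarrow>\<^sub>M subprob_algebra ZM"
  using measurable_prob_algebraD[OF Q_meas] .


lemma const_sub[measurable]:
  "(\<lambda>x. P) \<in> N \<rightarrow>\<^sub>M subprob_algebra P" "(\<lambda>x. Vm) \<in> N \<rightarrow>\<^sub>M subprob_algebra Vm"
  "(\<lambda>x. Um) \<in> N \<rightarrow>\<^sub>M subprob_algebra Um" "(\<lambda>x. D) \<in> N \<rightarrow>\<^sub>M subprob_algebra D"
  by (auto intro!: measurable_const prob_space_imp_subprob_space prob_space_PiM D
     simp: space_subprob_algebra P_def Vm_def Um_def)

lemma prob_spaces[simp]: "prob_space P" "prob_space Vm" "prob_space Um"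
  by (auto intro!: prob_space_PiM D simp: P_def Vm_def Um_def)

lemma coin_comp:
  assumes "g \<in> N \<rightarrow>\<^sub>M PiM I (\<lambda>_. coin)" "i \<in> I"
  shows "(\<lambda>x. g x i) \<in> N \<rightarrow>\<^sub>M count_space UNIV"
proof -
  have "(\<lambda>x. g x i) \<in> N \<rightarrow>\<^sub>M coin" using assms by measurable
  then show ?thesis using measurable_coin_dom measurable_comp[of _ N coin "\<lambda>b. b" "count_space UNIV"]
    by (simp add: o_def)
qed

lemma sample_m[measurable (raw)]:
  assumes f: "f \<in> N \<rightarrow>\<^sub>M ZM" and g: "g \<in> N \<rightarrow>\<^sub>M Vm" and h: "h \<in> N \<rightarrow>\<^sub>M Um"
  shows "(\<lambda>x. sample_of K n (f x) (g x) (h x)) \<in> N \<rightarrow>\<^sub>M SM"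
  unfolding sample_of_def SM_def
proof (rule measurable_restrict)
  fix k assume k: "k \<in> sIdx K n"
  obtain i j where kk: "k = (i, j)" by (cases k)
  have i: "i < K" and j: "j < n" using k kk by (auto simp: sIdx_def)
  have eq: "f x (i, g x i, j, h x (i, g x i, j)) =
     (if g x i then (if h x (i, True, j) then f x (i, True, j, True) else f x (i, True, j, False))
      else (if h x (i, False, j) then f x (i, False, j, True) else f x (i, False, j, False)))" for x
    by auto
  have p1: "{x\<in>space N. g x i} \<in> sets N"
    unfolding pred_def[symmetric] by (rule coin_comp[OF g[unfolded Vm_def]]) (use i in simp)
  have p2: "{x\<in>space N. h x (i, b, j)} \<in> sets N" for b
    unfolding pred_def[symmetric] by (rule coin_comp[OF h[unfolded Um_def]]) (use i j in \<open>simp add: uIdx_def\<close>)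
  have fc: "(\<lambda>x. f x (i, b, j, c)) \<in> N \<rightarrow>\<^sub>M Zm" for b c
    using measurable_compose[OF f[unfolded ZM_def] measurable_component_singleton[of "(i, b, j, c)" "zIdx K n" "\<lambda>_. Zm"]] i j
    by (simp add: zIdx_def)
  show "(\<lambda>x. (\<lambda>(i, j). f x (i, g x i, j, h x (i, g x i, j))) k) \<in> N \<rightarrow>\<^sub>M Zm"
    unfolding kk by (simp only: case_prod_conv eq) (intro measurable_If p1 p2 fc)+
qed

lemma OM_eq: "OM = P \<Otimes>\<^sub>M ZM \<Otimes>\<^sub>M Vm \<Otimes>\<^sub>M Um \<Otimes>\<^sub>M Wm"
  by (simp add: OM_def outM_def P_def ZM_def Vm_def Um_def)

lemma fl_eq: "fl_joint D mu Zm Wm A K n = bind P (\<lambda>mt. bind (Q mt) (\<lambda>zt. bind Vm (\<lambda>v. bind Um (\<lambda>u.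
   bind (A (sample_of K n zt v u)) (\<lambda>w. return OM (mt, zt, v, u, w))))))"
  by (simp add: fl_joint_def P_def Q_def Vm_def Um_def OM_def)

lemma K2_m: "(\<lambda>mt. bind (Q mt) (\<lambda>zt. bind Vm (\<lambda>v. bind Um (\<lambda>u.
   bind (A (sample_of K n zt v u)) (\<lambda>w. return OM (mt, zt, v, u, w)))))) \<in> P \<rightarrow>\<^sub>M subprob_algebra OM"
  unfolding OM_eq by measurable


lemma sample_space: "zt \<in> space ZM \<Longrightarrow> v \<in> space Vm \<Longrightarrow> u \<in> space Um \<Longrightarrow> sample_of K n zt v u \<in> space SM"
proof -
  assume [measurable]: "zt \<in> space ZM" "v \<in> space Vm" "u \<in> space Um"
  have "(\<lambda>x. sample_of K n zt v x) \<in> Um \<rightarrow>\<^sub>M SM" by measurable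
  from measurable_space[OF this \<open>u \<in> space Um\<close>] show ?thesis .
qed

lemma A_space: "s \<in> space SM \<Longrightarrow> prob_space (A s)" "s \<in> space SM \<Longrightarrow> sets (A s) = sets Wm"
  using measurable_space[OF A, of s] by (simp_all add: space_prob_algebra SM_def)

lemma bind_step:
  fixes f :: "_ \<Rightarrow> real"
  assumes f: "f \<in> borel_measurable OM" and fb: "\<And>x. x \<in> space OM \<Longrightarrow> \<bar>f x\<bar> \<le> C"
    and N: "N \<in> M \<rightarrow>\<^sub>M subprob_algebra OM" and M: "prob_space M"
  shows "integral\<^sup>L (bind M N) f = (\<integral>x. integral\<^sup>L (N x) f \<partial>M)"
proof (rule integral_bind[OF f fb N])
  show "finite_measure M" using M unfolding prob_space_def by simp
  show "AE x in M. emeasure (N x) (space (N x)) \<le> ennreal 1"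
    by (rule AE_I2) (use subprob_space_kernel[OF N] in \<open>simp add: subprob_space.subprob_emeasure_le_1\<close>)
qed

lemma formM:
  fixes f :: "_ \<Rightarrow> real"
  assumes f[measurable]: "f \<in> borel_measurable OM" and fb: "\<And>x. x \<in> space OM \<Longrightarrow> \<bar>f x\<bar> \<le> C"
  shows "integral\<^sup>L (fl_joint D mu Zm Wm A K n) f =
    (\<integral>mt. \<integral>zt. \<integral>v. \<integral>u. \<integral>w. f (mt,zt,v,u,w) \<partial>A (sample_of K n zt v u) \<partial>Um \<partial>Vm \<partial>Q mt \<partial>P)" (is "_ = ?rhs")
proof -
  have "integral\<^sup>L (fl_joint D mu Zm Wm A K n) f = (\<integral>mt. integral\<^sup>L (bind (Q mt) (\<lambda>zt. bind Vm (\<lambda>v. bind Um (\<lambda>u.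
   bind (A (sample_of K n zt v u)) (\<lambda>w. return OM (mt, zt, v, u, w)))))) f \<partial>P)"
    unfolding fl_eq by (rule bind_step[OF f fb K2_m prob_spaces(1)])
  also have "\<dots> = ?rhs"
  proof (rule Bochner_Integration.integral_cong[OF refl])
    fix mt assume mt[measurable]: "mt \<in> space P"
    have m3: "(\<lambda>zt. bind Vm (\<lambda>v. bind Um (\<lambda>u.
        bind (A (sample_of K n zt v u)) (\<lambda>w. return OM (mt, zt, v, u, w))))) \<in> Q mt \<rightarrow>\<^sub>M subprob_algebra OM"
      unfolding measurable_cong_sets[OF Q_sets[OF mt] refl] unfolding OM_eq by measurable
    show "integral\<^sup>L (bind (Q mt) (\<lambda>zt. bind Vm (\<lambda>v. bind Um (\<lambda>u.
        bind (A (sample_of K n zt v u)) (\<lambda>w. return OM (mt, zt, v, u, w)))))) f =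
      (\<integral>zt. \<integral>v. \<integral>u. \<integral>w. f (mt,zt,v,u,w) \<partial>A (sample_of K n zt v u) \<partial>Um \<partial>Vm \<partial>Q mt)"
      apply (subst bind_step[OF f fb m3 Q_prob[OF mt]], blast)
    proof (rule Bochner_Integration.integral_cong[OF refl])
      fix zt assume "zt \<in> space (Q mt)"
      then have zt[measurable]: "zt \<in> space ZM" using Q_space[OF mt] by simp
      have m4: "(\<lambda>v. bind Um (\<lambda>u.
        bind (A (sample_of K n zt v u)) (\<lambda>w. return OM (mt, zt, v, u, w)))) \<in> Vm \<rightarrow>\<^sub>M subprob_algebra OM"
        unfolding OM_eq by measurable
      show "integral\<^sup>L (bind Vm (\<lambda>v. bind Um (\<lambda>u.
        bind (A (sample_of K n zt v u)) (\<lambda>w. return OM (mt, zt, v, u, w))))) f =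
        (\<integral>v. \<integral>u. \<integral>w. f (mt,zt,v,u,w) \<partial>A (sample_of K n zt v u) \<partial>Um \<partial>Vm)"
        apply (subst bind_step[OF f fb m4 prob_spaces(2)], blast)
      proof (rule Bochner_Integration.integral_cong[OF refl])
        fix v assume v[measurable]: "v \<in> space Vm"
        have m5: "(\<lambda>u. bind (A (sample_of K n zt v u)) (\<lambda>w. return OM (mt, zt, v, u, w))) \<in> Um \<rightarrow>\<^sub>M subprob_algebra OM"
          unfolding OM_eq by measurable
        show "integral\<^sup>L (bind Um (\<lambda>u.
          bind (A (sample_of K n zt v u)) (\<lambda>w. return OM (mt, zt, v, u, w)))) f =
          (\<integral>u. \<integral>w. f (mt,zt,v,u,w) \<partial>A (sample_of K n zt v u) \<partial>Um)"
          apply (subst bind_step[OF f fb m5 prob_spaces(3)], blast)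
        proof (rule Bochner_Integration.integral_cong[OF refl])
          fix u assume u[measurable]: "u \<in> space Um"
          have sS: "sample_of K n zt v u \<in> space SM" using sample_space zt v u by blast
          have m6: "(\<lambda>w. return OM (mt, zt, v, u, w)) \<in> A (sample_of K n zt v u) \<rightarrow>\<^sub>M subprob_algebra OM"
            unfolding measurable_cong_sets[OF A_space(2)[OF sS] refl] unfolding OM_eq by measurable
          show "integral\<^sup>L (bind (A (sample_of K n zt v u)) (\<lambda>w. return OM (mt, zt, v, u, w))) f =
            (\<integral>w. f (mt,zt,v,u,w) \<partial>A (sample_of K n zt v u))"
            apply (subst bind_step[OF f fb m6 A_space(1)[OF sS]], blast)
          proof (rule Bochner_Integration.integral_cong[OF refl])
            fix w assume "w \<in> space (A (sample_of K n zt v u))"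
            then have "w \<in> space Wm" using sets_eq_imp_space_eq[OF A_space(2)[OF sS]] by simp
            then have "(mt, zt, v, u, w) \<in> space OM" using mt zt v u by (simp add: OM_eq space_pair_measure)
            then show "integral\<^sup>L (return OM (mt, zt, v, u, w)) f = f (mt, zt, v, u, w)"
              by (rule integral_return) simp
          qed
        qed
      qed
    qed
  qed
  finally show ?thesis .
qed


definition "XM = P \<Otimes>\<^sub>M ZM \<Otimes>\<^sub>M Vm \<Otimes>\<^sub>M Um"

definition "Gw f mt zt v u = (\<integral>w. f (mt,zt,v,u,w) \<partial>A (sample_of K n zt v u))"

definition "I4 g = (\<integral>mt. \<integral>zt. \<integral>v. \<integral>u. g mt zt v u \<partial>Um \<partial>Vm \<partial>Q mt \<partial>P)"

lemma Q_pair_sets: "mt \<in> space P \<Longrightarrow> sets (Q mt \<Otimes>\<^sub>M N) = sets (ZM \<Otimes>\<^sub>M N)"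
  by (rule sets_pair_measure_cong[OF Q_sets refl])

lemma meas_g_lift:
  fixes g :: "_ \<Rightarrow> _ \<Rightarrow> _ \<Rightarrow> _ \<Rightarrow> real"
  assumes g: "(\<lambda>(mt,zt,v,u). g mt zt v u) \<in> borel_measurable XM"
  shows "f1 \<in> N \<rightarrow>\<^sub>M P \<Longrightarrow> f2 \<in> N \<rightarrow>\<^sub>M ZM \<Longrightarrow> f3 \<in> N \<rightarrow>\<^sub>M Vm \<Longrightarrow> f4 \<in> N \<rightarrow>\<^sub>M Um \<Longrightarrow>
    (\<lambda>x. g (f1 x) (f2 x) (f3 x) (f4 x)) \<in> borel_measurable N"
  using measurable_compose[OF _ g, of "\<lambda>x. (f1 x, f2 x, f3 x, f4 x)" N] unfolding XM_def by simp

lemma formN: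
  fixes g :: "_ \<Rightarrow> _ \<Rightarrow> _ \<Rightarrow> _ \<Rightarrow> real"
  assumes g: "(\<lambda>(mt,zt,v,u). g mt zt v u) \<in> borel_measurable XM"
    and gb: "\<And>mt zt v u. mt \<in> space P \<Longrightarrow> zt \<in> space ZM \<Longrightarrow> v \<in> space Vm \<Longrightarrow> u \<in> space Um \<Longrightarrow> \<bar>g mt zt v u\<bar> \<le> C"
  shows "I4 g = (\<integral>v. \<integral>u. \<integral>mt. \<integral>zt. g mt zt v u \<partial>Q mt \<partial>P \<partial>Um \<partial>Vm)"
proof -
  note meas_g_lift[OF g, measurable (raw)]
  have "I4 g = (\<integral>mt. \<integral>v. \<integral>u. \<integral>zt. g mt zt v u \<partial>Q mt \<partial>Um \<partial>Vm \<partial>P)"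
    unfolding I4_def
  proof (rule Bochner_Integration.integral_cong[OF refl])
    fix mt assume mt[measurable]: "mt \<in> space P"
    have "(\<integral>zt. \<integral>v. \<integral>u. g mt zt v u \<partial>Um \<partial>Vm \<partial>Q mt) = (\<integral>v. \<integral>zt. \<integral>u. g mt zt v u \<partial>Um \<partial>Q mt \<partial>Vm)"
    proof (rule swap_int[OF Q_prob[OF mt] prob_spaces(2)])
      show "(\<lambda>(zt, v). \<integral>u. g mt zt v u \<partial>Um) \<in> borel_measurable (Q mt \<Otimes>\<^sub>M Vm)"
        unfolding measurable_cong_sets[OF Q_pair_sets[OF mt] refl] by measurable
      fix zt v assume "zt \<in> space (Q mt)" "v \<in> space Vm"
      then show "\<bar>\<integral>u. g mt zt v u \<partial>Um\<bar> \<le> C"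
        by (intro prob_integral_bound[OF prob_spaces(3)]) (auto simp: Q_space[OF mt] intro: gb[OF mt])
    qed
    also have "\<dots> = (\<integral>v. \<integral>u. \<integral>zt. g mt zt v u \<partial>Q mt \<partial>Um \<partial>Vm)"
    proof (rule Bochner_Integration.integral_cong[OF refl])
      fix v assume v[measurable]: "v \<in> space Vm"
      show "(\<integral>zt. \<integral>u. g mt zt v u \<partial>Um \<partial>Q mt) = (\<integral>u. \<integral>zt. g mt zt v u \<partial>Q mt \<partial>Um)"
      proof (rule swap_int[OF Q_prob[OF mt] prob_spaces(3)])
        show "(\<lambda>(zt, u). g mt zt v u) \<in> borel_measurable (Q mt \<Otimes>\<^sub>M Um)"
          unfolding measurable_cong_sets[OF Q_pair_sets[OF mt] refl] by measurable
        fix zt u assume "zt \<in> space (Q mt)" "u \<in> space Um"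
        then show "\<bar>g mt zt v u\<bar> \<le> C" using gb mt v by (auto simp: Q_space[OF mt])
      qed
    qed
    finally show "(\<integral>zt. \<integral>v. \<integral>u. g mt zt v u \<partial>Um \<partial>Vm \<partial>Q mt) = (\<integral>v. \<integral>u. \<integral>zt. g mt zt v u \<partial>Q mt \<partial>Um \<partial>Vm)" .
  qed
  also have "\<dots> = (\<integral>v. \<integral>mt. \<integral>u. \<integral>zt. g mt zt v u \<partial>Q mt \<partial>Um \<partial>P \<partial>Vm)"
  proof (rule swap_int[OF prob_spaces(1) prob_spaces(2)])
    show "(\<lambda>(mt, v). \<integral>u. \<integral>zt. g mt zt v u \<partial>Q mt \<partial>Um) \<in> borel_measurable (P \<Otimes>\<^sub>M Vm)"
      by measurable
    fix mt v assume mt: "mt \<in> space P" and v: "v \<in> space Vm"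
    have m: "(\<lambda>u. \<integral>zt. g mt zt v u \<partial>Q mt) \<in> borel_measurable Um" using mt v by measurable
    show "\<bar>\<integral>u. \<integral>zt. g mt zt v u \<partial>Q mt \<partial>Um\<bar> \<le> C"
    proof (rule prob_integral_bound[OF prob_spaces(3) m])
      fix u assume u: "u \<in> space Um"
      have "(\<lambda>zt. g mt zt v u) \<in> borel_measurable (Q mt)"
        unfolding measurable_cong_sets[OF Q_sets[OF mt] refl] using mt v u by measurable
      then show "\<bar>\<integral>zt. g mt zt v u \<partial>Q mt\<bar> \<le> C"
        by (rule prob_integral_bound[OF Q_prob[OF mt]]) (use gb mt v u in \<open>auto simp: Q_space[OF mt]\<close>)
    qed
  qed
  also have "\<dots> = (\<integral>v. \<integral>u. \<integral>mt. \<integral>zt. g mt zt v u \<partial>Q mt \<partial>P \<partial>Um \<partial>Vm)"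
  proof (rule Bochner_Integration.integral_cong[OF refl])
    fix v assume v[measurable]: "v \<in> space Vm"
    show "(\<integral>mt. \<integral>u. \<integral>zt. g mt zt v u \<partial>Q mt \<partial>Um \<partial>P) = (\<integral>u. \<integral>mt. \<integral>zt. g mt zt v u \<partial>Q mt \<partial>P \<partial>Um)"
    proof (rule swap_int[OF prob_spaces(1) prob_spaces(3)])
      show "(\<lambda>(mt, u). \<integral>zt. g mt zt v u \<partial>Q mt) \<in> borel_measurable (P \<Otimes>\<^sub>M Um)"
        by measurable
      fix mt u assume mt: "mt \<in> space P" and u: "u \<in> space Um"
      have "(\<lambda>zt. g mt zt v u) \<in> borel_measurable (Q mt)"
        unfolding measurable_cong_sets[OF Q_sets[OF mt] refl] using mt v u by measurable
      then show "\<bar>\<integral>zt. g mt zt v u \<partial>Q mt\<bar> \<le> C"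
        by (rule prob_integral_bound[OF Q_prob[OF mt]]) (use gb mt v u in \<open>auto simp: Q_space[OF mt]\<close>)
    qed
  qed
  finally show ?thesis .
qed

end



lemma coin_not: "distr coin coin Not = coin"
proof -
  have "distr coin coin Not = distr coin (count_space UNIV) Not"
    by (rule distr_cong) auto
  also have "\<dots> = measure_pmf (map_pmf Not (pmf_of_set UNIV))"
    unfolding coin_def map_pmf_rep_eq ..
  also have "map_pmf Not (pmf_of_set (UNIV::bool set)) = pmf_of_set (Not ` UNIV)"
    by (rule map_pmf_of_set_inj) (auto simp: inj_def)
  also have "Not ` UNIV = UNIV" by (auto simp: UNIV_bool)
  finally show ?thesis unfolding coin_def .
qed

lemma coin_self_meas: "f \<in> coin \<rightarrow>\<^sub>M coin"
  by (auto simp: measurable_def)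

lemma coinPi_not:
  assumes "finite I"
  shows "distr (PiM I (\<lambda>_. coin)) (PiM I (\<lambda>_. coin)) (\<lambda>v. \<lambda>i\<in>I. \<not> v i) = PiM I (\<lambda>_. coin)"
proof -
  have "distr (PiM I (\<lambda>_. coin)) (PiM I (\<lambda>_. coin)) (compose I Not) = PiM I (\<lambda>i. distr coin coin Not)"
    by (rule distr_PiM_finite_prob_space') (use assms coin_self_meas in auto)
  moreover have "compose I Not = (\<lambda>v. \<lambda>i\<in>I. \<not> v i)" by (rule ext) (simp add: compose_def)
  ultimately show ?thesis by (simp add: coin_not)
qed

lemma reindex_Pi:
  assumes p: "bij_betw p I I" and prob: "\<And>i. i \<in> I \<Longrightarrow> prob_space (M i)"
  shows "distr (PiM I M) (PiM I (\<lambda>i. M (p i))) (\<lambda>\<omega>. \<lambda>k\<in>I. \<omega> (p k)) = PiM I (\<lambda>i. M (p i))"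
  by (rule distr_PiM_reindex) (use p prob in \<open>auto simp: bij_betw_def\<close>)

lemma reindex_meas:
  assumes p: "bij_betw p I I"
  shows "(\<lambda>\<omega>. \<lambda>k\<in>I. \<omega> (p k)) \<in> PiM I (\<lambda>_. N) \<rightarrow>\<^sub>M PiM I (\<lambda>_. N)"
proof (rule measurable_restrict)
  fix k assume "k \<in> I"
  then have "p k \<in> I" using p by (auto simp: bij_betw_def)
  then show "(\<lambda>\<omega>. \<omega> (p k)) \<in> PiM I (\<lambda>_. N) \<rightarrow>\<^sub>M N" by measurable
qed

context fl
begin

lemma Gw_meas:
  fixes f :: "_ \<Rightarrow> real"
  assumes f: "f \<in> borel_measurable OM"
  shows "(\<lambda>(mt,zt,v,u). Gw f mt zt v u) \<in> borel_measurable XM"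
proof -
  have [measurable]: "f \<in> borel_measurable (P \<Otimes>\<^sub>M ZM \<Otimes>\<^sub>M Vm \<Otimes>\<^sub>M Um \<Otimes>\<^sub>M Wm)" using f by (simp add: OM_eq)
  show ?thesis unfolding Gw_def XM_def by measurable
qed

lemma Gw_bound:
  fixes f :: "_ \<Rightarrow> real"
  assumes f: "f \<in> borel_measurable OM" and fb: "\<And>x. x \<in> space OM \<Longrightarrow> \<bar>f x\<bar> \<le> C"
    and mt: "mt \<in> space P" and zt: "zt \<in> space ZM" and v: "v \<in> space Vm" and u: "u \<in> space Um"
  shows "\<bar>Gw f mt zt v u\<bar> \<le> C"
  unfolding Gw_def
proof (rule prob_integral_bound[OF A_space(1)[OF sample_space[OF zt v u]]])
  have sA: "sets (A (sample_of K n zt v u)) = sets Wm" using A_space(2)[OF sample_space[OF zt v u]] .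
  show "(\<lambda>w. f (mt, zt, v, u, w)) \<in> borel_measurable (A (sample_of K n zt v u))"
    unfolding measurable_cong_sets[OF sA refl] using f mt zt v u unfolding OM_eq by measurable
  fix w assume "w \<in> space (A (sample_of K n zt v u))"
  then have "w \<in> space Wm" using sets_eq_imp_space_eq[OF sA] by simp
  then have "(mt, zt, v, u, w) \<in> space OM" using mt zt v u by (simp add: OM_eq space_pair_measure)
  then show "\<bar>f (mt, zt, v, u, w)\<bar> \<le> C" by (rule fb)
qed

lemma E_I4:
  fixes f :: "_ \<Rightarrow> real"
  assumes f: "f \<in> borel_measurable OM" and fb: "\<And>x. x \<in> space OM \<Longrightarrow> \<bar>f x\<bar> \<le> C"
  shows "integral\<^sup>L (fl_joint D mu Zm Wm A K n) f = I4 (Gw f)"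
  by (simp add: formM[OF f fb] I4_def Gw_def)

lemma I4_cong:
  assumes "\<And>mt zt v u. mt \<in> space P \<Longrightarrow> zt \<in> space ZM \<Longrightarrow> v \<in> space Vm \<Longrightarrow> u \<in> space Um \<Longrightarrow> g1 mt zt v u = g2 mt zt v u"
  shows "I4 g1 = I4 g2"
  unfolding I4_def
proof (intro Bochner_Integration.integral_cong[OF refl])
  fix mt zt v u assume mt: "mt \<in> space P" and zt: "zt \<in> space (Q mt)" and v: "v \<in> space Vm" and u: "u \<in> space Um"
  show "g1 mt zt v u = g2 mt zt v u" using assms[OF mt _ v u] zt Q_space[OF mt] by simp
qed


lemma I4_sym:
  fixes g :: "_ \<Rightarrow> _ \<Rightarrow> _ \<Rightarrow> _ \<Rightarrow> real"
  assumes g: "(\<lambda>(mt,zt,v,u). g mt zt v u) \<in> borel_measurable XM"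
    and pc: "bij_betw pc (clientIdx K) (clientIdx K)" and pz: "bij_betw pz (zIdx K n) (zIdx K n)"
    and pzc: "\<And>i b j c. (i,b,j,c) \<in> zIdx K n \<Longrightarrow> (fst (pz (i,b,j,c)), fst (snd (pz (i,b,j,c)))) = pc (i,b)"
    and vT: "vT \<in> Vm \<rightarrow>\<^sub>M Vm" "distr Vm Vm vT = Vm" and uT: "uT \<in> Um \<rightarrow>\<^sub>M Um" "distr Um Um uT = Um"
  shows "I4 (\<lambda>mt zt v u. g (\<lambda>k\<in>clientIdx K. mt (pc k)) (\<lambda>k\<in>zIdx K n. zt (pz k)) (vT v) (uT u)) = I4 g"
proof -
  define mtT where "mtT mt = (\<lambda>k\<in>clientIdx K. mt (pc k))" for mt :: "nat \<times> bool \<Rightarrow> 'c"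
  define ztT where "ztT zt = (\<lambda>k\<in>zIdx K n. zt (pz k))" for zt :: "nat \<times> bool \<times> nat \<times> bool \<Rightarrow> 'z"
  have mtT_m[measurable]: "mtT \<in> P \<rightarrow>\<^sub>M P" unfolding mtT_def[abs_def] P_def by (rule reindex_meas[OF pc])
  have ztT_m[measurable]: "ztT \<in> ZM \<rightarrow>\<^sub>M ZM" unfolding ztT_def[abs_def] ZM_def by (rule reindex_meas[OF pz])
  note meas_g_lift[OF g, measurable (raw)]
  note [measurable] = vT(1) uT(1)
  define F where "F a b = (\<integral>v. \<integral>u. g a b v u \<partial>Um \<partial>Vm)" for a b
  have F_m[measurable]: "(\<lambda>(a,b). F a b) \<in> borel_measurable (P \<Otimes>\<^sub>M ZM)" unfolding F_def by measurable
  have F_m'[measurable (raw)]: "f1 \<in> N \<rightarrow>\<^sub>M P \<Longrightarrow> f2 \<in> N \<rightarrow>\<^sub>M ZM \<Longrightarrow> (\<lambda>x. F (f1 x) (f2 x)) \<in> borel_measurable N" for f1 f2 N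
    using measurable_compose[OF _ F_m, of "\<lambda>x. (f1 x, f2 x)" N] by simp
  have s1: "(\<integral>v. \<integral>u. g a b (vT v) (uT u) \<partial>Um \<partial>Vm) = F a b" if a: "a \<in> space P" and b: "b \<in> space ZM" for a b
  proof -
    have "(\<integral>v. \<integral>u. g a b (vT v) (uT u) \<partial>Um \<partial>Vm) = (\<integral>v. \<integral>u. g a b (vT v) u \<partial>Um \<partial>Vm)"
    proof (rule Bochner_Integration.integral_cong[OF refl])
      fix v assume v: "v \<in> space Vm"
      have "(\<integral>u. g a b (vT v) u \<partial>Um) = integral\<^sup>L (distr Um Um uT) (\<lambda>u. g a b (vT v) u)" by (simp add: uT(2))
      also have "\<dots> = (\<integral>u. g a b (vT v) (uT u) \<partial>Um)"
        by (rule integral_distr) (use a b v in measurable)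
      finally show "(\<integral>u. g a b (vT v) (uT u) \<partial>Um) = (\<integral>u. g a b (vT v) u \<partial>Um)" by simp
    qed
    also have "\<dots> = F a b"
    proof -
      have "F a b = integral\<^sup>L (distr Vm Vm vT) (\<lambda>v. \<integral>u. g a b v u \<partial>Um)" by (simp add: vT(2) F_def)
      also have "\<dots> = (\<integral>v. \<integral>u. g a b (vT v) u \<partial>Um \<partial>Vm)"
        by (rule integral_distr) (use a b in measurable)
      finally show ?thesis by simp
    qed
    finally show ?thesis .
  qed
  have mtT_sp: "mtT mt \<in> space P" if "mt \<in> space P" for mt using measurable_space[OF mtT_m that] .
  have ztT_sp: "ztT zt \<in> space ZM" if "zt \<in> space ZM" for zt using measurable_space[OF ztT_m that] .
  have dQ: "distr (Q mt) (Q (mtT mt)) ztT = Q (mtT mt)" if mt: "mt \<in> space P" for mt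
  proof -
    have "distr (Q mt) (PiM (zIdx K n) (\<lambda>k. (\<lambda>(i,b,j,c). mu (mt (i,b))) (pz k))) ztT =
        PiM (zIdx K n) (\<lambda>k. (\<lambda>(i,b,j,c). mu (mt (i,b))) (pz k))"
      unfolding Q_def ztT_def[abs_def] by (rule reindex_Pi[OF pz]) (use mt in \<open>auto simp: zIdx_def mu_space space_P_D\<close>)
    moreover have "PiM (zIdx K n) (\<lambda>k. (\<lambda>(i,b,j,c). mu (mt (i,b))) (pz k)) = Q (mtT mt)"
      unfolding Q_def
    proof (rule PiM_cong[OF refl])
      fix k assume k: "k \<in> zIdx K n"
      obtain i b j c where kk: "k = (i,b,j,c)" by (cases k) auto
      have ib: "(i,b) \<in> clientIdx K" using k kk by (auto simp: zIdx_def clientIdx_def)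
      have e: "(fst (pz k), fst (snd (pz k))) = pc (i,b)" using pzc k kk by simp
      have "(\<lambda>(i,b,j,c). mu (mt (i,b))) (pz k) = mu (mt (pc (i,b)))"
        using e by (cases "pz k") auto
      moreover have "(\<lambda>(i,b,j,c). mu (mtT mt (i,b))) k = mu (mt (pc (i,b)))"
        using ib kk by (simp add: mtT_def)
      ultimately show "(\<lambda>(i,b,j,c). mu (mt (i,b))) (pz k) = (\<lambda>(i,b,j,c). mu (mtT mt (i,b))) k" by simp
    qed
    ultimately show ?thesis by simp
  qed
  have s2: "(\<integral>zt. F (mtT mt) (ztT zt) \<partial>Q mt) = (\<integral>zt. F (mtT mt) zt \<partial>Q (mtT mt))" if mt: "mt \<in> space P" for mt
  proof -
    have m1: "ztT \<in> Q mt \<rightarrow>\<^sub>M Q (mtT mt)"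
      unfolding measurable_cong_sets[OF Q_sets[OF mt] Q_sets[OF mtT_sp[OF mt]]] by (rule ztT_m)
    have m2: "F (mtT mt) \<in> borel_measurable (Q (mtT mt))"
      unfolding measurable_cong_sets[OF Q_sets[OF mtT_sp[OF mt]] refl] using mt by measurable
    show ?thesis
      by (subst dQ[OF mt, symmetric], rule integral_distr[OF m1 m2, symmetric])
  qed
  define H where "H a = (\<integral>zt. F a zt \<partial>Q a)" for a
  have H_m: "H \<in> borel_measurable P" unfolding H_def by measurable
  have dP: "distr P P mtT = P"
    unfolding P_def mtT_def[abs_def] using reindex_Pi[OF pc, of "\<lambda>_. D"] D by simp
  have "I4 (\<lambda>mt zt v u. g (\<lambda>k\<in>clientIdx K. mt (pc k)) (\<lambda>k\<in>zIdx K n. zt (pz k)) (vT v) (uT u))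
      = (\<integral>mt. \<integral>zt. F (mtT mt) (ztT zt) \<partial>Q mt \<partial>P)"
    unfolding I4_def mtT_def[symmetric] ztT_def[symmetric]
  proof (intro Bochner_Integration.integral_cong[OF refl])
    fix mt zt assume mt: "mt \<in> space P" and zt: "zt \<in> space (Q mt)"
    show "(\<integral>v. \<integral>u. g (mtT mt) (ztT zt) (vT v) (uT u) \<partial>Um \<partial>Vm) = F (mtT mt) (ztT zt)"
      by (rule s1[OF mtT_sp[OF mt] ztT_sp]) (use zt Q_space[OF mt] in simp)
  qed
  also have "\<dots> = (\<integral>mt. H (mtT mt) \<partial>P)"
    unfolding H_def by (intro Bochner_Integration.integral_cong[OF refl] s2)
  also have "\<dots> = integral\<^sup>L (distr P P mtT) H"
    by (rule integral_distr[symmetric, OF mtT_m H_m])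
  also have "\<dots> = I4 g" unfolding dP H_def F_def I4_def ..
  finally show ?thesis .
qed


lemma E_sym:
  fixes f1 f2 :: "_ \<Rightarrow> real"
  assumes f1: "f1 \<in> borel_measurable OM" and f1b: "\<And>x. x \<in> space OM \<Longrightarrow> \<bar>f1 x\<bar> \<le> C1"
    and f2: "f2 \<in> borel_measurable OM" and f2b: "\<And>x. x \<in> space OM \<Longrightarrow> \<bar>f2 x\<bar> \<le> C2"
    and pc: "bij_betw pc (clientIdx K) (clientIdx K)" and pz: "bij_betw pz (zIdx K n) (zIdx K n)"
    and pzc: "\<And>i b j c. (i,b,j,c) \<in> zIdx K n \<Longrightarrow> (fst (pz (i,b,j,c)), fst (snd (pz (i,b,j,c)))) = pc (i,b)"
    and vT: "vT \<in> Vm \<rightarrow>\<^sub>M Vm" "distr Vm Vm vT = Vm" and uT: "uT \<in> Um \<rightarrow>\<^sub>M Um" "distr Um Um uT = Um"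
    and hs: "\<And>zt v u. zt \<in> space ZM \<Longrightarrow> v \<in> space Vm \<Longrightarrow> u \<in> space Um \<Longrightarrow>
       sample_of K n (\<lambda>k\<in>zIdx K n. zt (pz k)) (vT v) (uT u) = sample_of K n zt v u"
    and hf: "\<And>mt zt v u w. mt \<in> space P \<Longrightarrow> zt \<in> space ZM \<Longrightarrow> v \<in> space Vm \<Longrightarrow> u \<in> space Um \<Longrightarrow> w \<in> space Wm \<Longrightarrow>
       f2 (mt,zt,v,u,w) = f1 (\<lambda>k\<in>clientIdx K. mt (pc k), \<lambda>k\<in>zIdx K n. zt (pz k), vT v, uT u, w)"
  shows "integral\<^sup>L (fl_joint D mu Zm Wm A K n) f2 = integral\<^sup>L (fl_joint D mu Zm Wm A K n) f1"
proof -
  have "integral\<^sup>L (fl_joint D mu Zm Wm A K n) f2 = I4 (Gw f2)" by (rule E_I4[OF f2 f2b])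
  also have "\<dots> = I4 (\<lambda>mt zt v u. Gw f1 (\<lambda>k\<in>clientIdx K. mt (pc k)) (\<lambda>k\<in>zIdx K n. zt (pz k)) (vT v) (uT u))"
  proof (rule I4_cong)
    fix mt zt v u assume mt: "mt \<in> space P" and zt: "zt \<in> space ZM" and v: "v \<in> space Vm" and u: "u \<in> space Um"
    have sS: "sample_of K n zt v u \<in> space SM" using sample_space[OF zt v u] .
    show "Gw f2 mt zt v u = Gw f1 (\<lambda>k\<in>clientIdx K. mt (pc k)) (\<lambda>k\<in>zIdx K n. zt (pz k)) (vT v) (uT u)"
      unfolding Gw_def hs[OF zt v u]
    proof (rule Bochner_Integration.integral_cong[OF refl])
      fix w assume "w \<in> space (A (sample_of K n zt v u))"
      then have "w \<in> space Wm" using sets_eq_imp_space_eq[OF A_space(2)[OF sS]] by simp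
      then show "f2 (mt, zt, v, u, w) = f1 (\<lambda>k\<in>clientIdx K. mt (pc k), \<lambda>k\<in>zIdx K n. zt (pz k), vT v, uT u, w)"
        by (rule hf[OF mt zt v u])
    qed
  qed
  also have "\<dots> = I4 (Gw f1)"
    by (rule I4_sym[OF Gw_meas[OF f1] pc pz pzc vT uT])
  also have "\<dots> = integral\<^sup>L (fl_joint D mu Zm Wm A K n) f1" by (rule E_I4[OF f1 f1b, symmetric])
  finally show ?thesis .
qed

lemma symT:
  fixes f1 f2 :: "_ \<Rightarrow> real"
  assumes f1: "f1 \<in> borel_measurable OM" and f1b: "\<And>x. x \<in> space OM \<Longrightarrow> \<bar>f1 x\<bar> \<le> C1"
    and f2: "f2 \<in> borel_measurable OM" and f2b: "\<And>x. x \<in> space OM \<Longrightarrow> \<bar>f2 x\<bar> \<le> C2"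
    and hf: "\<And>mt zt v u w. mt \<in> space P \<Longrightarrow> zt \<in> space ZM \<Longrightarrow> v \<in> space Vm \<Longrightarrow> u \<in> space Um \<Longrightarrow> w \<in> space Wm \<Longrightarrow>
       f2 (mt,zt,v,u,w) = f1 (\<lambda>k\<in>clientIdx K. mt ((\<lambda>(i,b). (i, \<not> b)) k), \<lambda>k\<in>zIdx K n. zt ((\<lambda>(i,b,j,c). (i, \<not> b, j, c)) k),
          \<lambda>i\<in>{..<K}. \<not> v i, \<lambda>k\<in>uIdx K n. u ((\<lambda>(i,b,j). (i, \<not> b, j)) k), w)"
  shows "integral\<^sup>L (fl_joint D mu Zm Wm A K n) f2 = integral\<^sup>L (fl_joint D mu Zm Wm A K n) f1"
proof (rule E_sym[OF f1 f1b f2 f2b])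
  show "bij_betw (\<lambda>(i,b). (i, \<not> b)) (clientIdx K) (clientIdx K)"
    by (rule bij_betwI[where g = "\<lambda>(i,b). (i, \<not> b)"]) (auto simp: clientIdx_def)
  show "bij_betw (\<lambda>(i,b,j,c). (i, \<not> b, j, c)) (zIdx K n) (zIdx K n)"
    by (rule bij_betwI[where g = "\<lambda>(i,b,j,c). (i, \<not> b, j, c)"]) (auto simp: zIdx_def)
  have bu: "bij_betw (\<lambda>(i,b,j). (i, \<not> b, j)) (uIdx K n) (uIdx K n)"
    by (rule bij_betwI[where g = "\<lambda>(i,b,j). (i, \<not> b, j)"]) (auto simp: uIdx_def)
  show "(\<lambda>u. \<lambda>k\<in>uIdx K n. u ((\<lambda>(i,b,j). (i, \<not> b, j)) k)) \<in> Um \<rightarrow>\<^sub>M Um"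
    unfolding Um_def by (rule reindex_meas[OF bu])
  show "distr Um Um (\<lambda>u. \<lambda>k\<in>uIdx K n. u ((\<lambda>(i,b,j). (i, \<not> b, j)) k)) = Um"
    unfolding Um_def using reindex_Pi[OF bu, of "\<lambda>_. coin"] by simp
  show "(\<lambda>v. \<lambda>i\<in>{..<K}. \<not> v i) \<in> Vm \<rightarrow>\<^sub>M Vm"
    unfolding Vm_def
  proof (rule measurable_restrict)
    fix i :: nat assume "i \<in> {..<K}"
    then show "(\<lambda>v. \<not> v i) \<in> PiM {..<K} (\<lambda>_. coin) \<rightarrow>\<^sub>M coin"
      using measurable_compose[OF measurable_component_singleton[of i "{..<K}" "\<lambda>_. coin"] coin_self_meas[of Not]] by simp
  qed
  show "distr Vm Vm (\<lambda>v. \<lambda>i\<in>{..<K}. \<not> v i) = Vm" unfolding Vm_def by (rule coinPi_not) simp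
  fix zt v u assume zt: "zt \<in> space ZM" and v: "v \<in> space Vm" and u: "u \<in> space Um"
  show "sample_of K n (\<lambda>k\<in>zIdx K n. zt ((\<lambda>(i,b,j,c). (i, \<not> b, j, c)) k)) (\<lambda>i\<in>{..<K}. \<not> v i)
      (\<lambda>k\<in>uIdx K n. u ((\<lambda>(i,b,j). (i, \<not> b, j)) k)) = sample_of K n zt v u"
    unfolding sample_of_def by (rule restrict_ext) (auto simp: sIdx_def zIdx_def uIdx_def)
qed (simp_all add: hf)

lemma symR:
  fixes f1 f2 :: "_ \<Rightarrow> real"
  assumes f1: "f1 \<in> borel_measurable OM" and f1b: "\<And>x. x \<in> space OM \<Longrightarrow> \<bar>f1 x\<bar> \<le> C1"
    and f2: "f2 \<in> borel_measurable OM" and f2b: "\<And>x. x \<in> space OM \<Longrightarrow> \<bar>f2 x\<bar> \<le> C2"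
    and hf: "\<And>mt zt v u w. mt \<in> space P \<Longrightarrow> zt \<in> space ZM \<Longrightarrow> v \<in> space Vm \<Longrightarrow> u \<in> space Um \<Longrightarrow> w \<in> space Wm \<Longrightarrow>
       f2 (mt,zt,v,u,w) = f1 (\<lambda>k\<in>clientIdx K. mt k, \<lambda>k\<in>zIdx K n. zt ((\<lambda>(i,b,j,c). (i, b, j, \<not> c)) k),
          v, \<lambda>k\<in>uIdx K n. \<not> u k, w)"
  shows "integral\<^sup>L (fl_joint D mu Zm Wm A K n) f2 = integral\<^sup>L (fl_joint D mu Zm Wm A K n) f1"
proof (rule E_sym[where pc = "\<lambda>k. k" and vT = "\<lambda>v. v", OF f1 f1b f2 f2b])
  show "bij_betw (\<lambda>k. k) (clientIdx K) (clientIdx K)" by (rule bij_betwI[where g="\<lambda>k. k"]) auto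
  show "bij_betw (\<lambda>(i,b,j,c). (i, b, j, \<not> c)) (zIdx K n) (zIdx K n)"
    by (rule bij_betwI[where g = "\<lambda>(i,b,j,c). (i, b, j, \<not> c)"]) (auto simp: zIdx_def)
  show "(\<lambda>u. \<lambda>k\<in>uIdx K n. \<not> u k) \<in> Um \<rightarrow>\<^sub>M Um"
    unfolding Um_def
  proof (rule measurable_restrict)
    fix k assume "k \<in> uIdx K n"
    then show "(\<lambda>u. \<not> u k) \<in> PiM (uIdx K n) (\<lambda>_. coin) \<rightarrow>\<^sub>M coin"
      using measurable_compose[OF measurable_component_singleton[of k "uIdx K n" "\<lambda>_. coin"] coin_self_meas[of Not]] by simp
  qed
  show "distr Um Um (\<lambda>u. \<lambda>k\<in>uIdx K n. \<not> u k) = Um" unfolding Um_def by (rule coinPi_not) simp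
  fix zt v u assume zt: "zt \<in> space ZM" and v: "v \<in> space Vm" and u: "u \<in> space Um"
  show "sample_of K n (\<lambda>k\<in>zIdx K n. zt ((\<lambda>(i,b,j,c). (i, b, j, \<not> c)) k)) v
      (\<lambda>k\<in>uIdx K n. \<not> u k) = sample_of K n zt v u"
    unfolding sample_of_def by (rule restrict_ext) (auto simp: sIdx_def zIdx_def uIdx_def)
qed (simp_all add: hf)


lemma B_nonneg: "0 \<le> B" using nonneg bnd order_trans by blast

lemma loss_abs: "\<bar>loss w z\<bar> \<le> B" using nonneg[of w z] bnd[of w z] by (simp add: abs_le_iff)

lemma risk_m[measurable (raw)]:
  assumes f[measurable]: "f \<in> N \<rightarrow>\<^sub>M D" and g[measurable]: "g \<in> N \<rightarrow>\<^sub>M Wm"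
  shows "(\<lambda>x. risk (mu (f x)) loss (g x)) \<in> borel_measurable N"
  unfolding risk_def
proof (rule measurable_kernel_integral[where N=Zm])
  show "(\<lambda>x. mu (f x)) \<in> N \<rightarrow>\<^sub>M subprob_algebra Zm" by measurable
  have "(\<lambda>p. loss (g (fst p)) (snd p)) \<in> borel_measurable (N \<Otimes>\<^sub>M Zm)" by measurable
  then show "(\<lambda>(x, y). loss (g x) y) \<in> borel_measurable (N \<Otimes>\<^sub>M Zm)" by (simp add: case_prod_unfold)
qed

lemma pop_m[measurable (raw)]:
  assumes g: "g \<in> N \<rightarrow>\<^sub>M Wm"
  shows "(\<lambda>x. pop_risk D mu loss (g x)) \<in> borel_measurable N"
  unfolding pop_risk_def
proof (rule measurable_kernel_integral[where N=D])
  show "(\<lambda>x. D) \<in> N \<rightarrow>\<^sub>M subprob_algebra D" by (rule const_sub(4))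
  have "(\<lambda>p. risk (mu (snd p)) loss (g (fst p))) \<in> borel_measurable (N \<Otimes>\<^sub>M D)"
    by (rule risk_m[OF measurable_snd measurable_compose[OF measurable_fst g]])
  then show "(\<lambda>(x, y). risk (mu y) loss (g x)) \<in> borel_measurable (N \<Otimes>\<^sub>M D)" by (simp add: case_prod_unfold)
qed

lemma risk_bound: "c \<in> space D \<Longrightarrow> w \<in> space Wm \<Longrightarrow> \<bar>risk (mu c) loss w\<bar> \<le> B"
  unfolding risk_def
proof (rule prob_integral_bound[OF mu_space(1)])
  assume c: "c \<in> space D" and w[measurable]: "w \<in> space Wm"
  show "(\<lambda>z. loss w z) \<in> borel_measurable (mu c)"
    unfolding measurable_cong_sets[OF mu_space(2)[OF c] refl] by measurable
qed (auto simp: loss_abs)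

lemma pop_bound: "w \<in> space Wm \<Longrightarrow> \<bar>pop_risk D mu loss w\<bar> \<le> B"
  unfolding pop_risk_def
proof (rule prob_integral_bound[OF D])
  assume w[measurable]: "w \<in> space Wm"
  show "(\<lambda>c. risk (mu c) loss w) \<in> borel_measurable D" by measurable
  show "\<bar>risk (mu c) loss w\<bar> \<le> B" if "c \<in> space D" for c by (rule risk_bound[OF that w])
qed

lemma E_congN:
  fixes f1 f2 :: "_ \<Rightarrow> real"
  assumes f1: "f1 \<in> borel_measurable OM" and f1b: "\<And>x. x \<in> space OM \<Longrightarrow> \<bar>f1 x\<bar> \<le> C1"
    and f2: "f2 \<in> borel_measurable OM" and f2b: "\<And>x. x \<in> space OM \<Longrightarrow> \<bar>f2 x\<bar> \<le> C2"
    and h: "\<And>v u. v \<in> space Vm \<Longrightarrow> u \<in> space Um \<Longrightarrow>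
      (\<integral>mt. \<integral>zt. Gw f1 mt zt v u \<partial>Q mt \<partial>P) = (\<integral>mt. \<integral>zt. Gw f2 mt zt v u \<partial>Q mt \<partial>P)"
  shows "integral\<^sup>L (fl_joint D mu Zm Wm A K n) f1 = integral\<^sup>L (fl_joint D mu Zm Wm A K n) f2"
proof -
  have "integral\<^sup>L (fl_joint D mu Zm Wm A K n) f1 = I4 (Gw f1)" by (rule E_I4[OF f1 f1b])
  also have "\<dots> = (\<integral>v. \<integral>u. \<integral>mt. \<integral>zt. Gw f1 mt zt v u \<partial>Q mt \<partial>P \<partial>Um \<partial>Vm)"
    by (rule formN[OF Gw_meas[OF f1] Gw_bound[OF f1 f1b]])
  also have "\<dots> = (\<integral>v. \<integral>u. \<integral>mt. \<integral>zt. Gw f2 mt zt v u \<partial>Q mt \<partial>P \<partial>Um \<partial>Vm)"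
    by (intro Bochner_Integration.integral_cong[OF refl] h)
  also have "\<dots> = I4 (Gw f2)"
    by (rule formN[OF Gw_meas[OF f2] Gw_bound[OF f2 f2b], symmetric])
  also have "\<dots> = integral\<^sup>L (fl_joint D mu Zm Wm A K n) f2" by (rule E_I4[OF f2 f2b, symmetric])
  finally show ?thesis .
qed

lemma TP:
  assumes v[measurable]: "v \<in> space Vm" and u[measurable]: "u \<in> space Um" and k: "k \<in> zIdx K n"
    and unread: "\<And>i j. i < K \<Longrightarrow> j < n \<Longrightarrow> k \<noteq> (i, v i, j, u (i, v i, j))"
    and mt: "mt \<in> space P"
  shows "(\<integral>zt. \<integral>w. loss w (zt k) \<partial>A (sample_of K n zt v u) \<partial>Q mt) =
    (\<integral>zt. \<integral>w. risk (mu (mt (fst k, fst (snd k)))) loss w \<partial>A (sample_of K n zt v u) \<partial>Q mt)"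
proof -
  define M where "M = (\<lambda>(i::nat,b::bool,j::nat,c::bool). mu (mt (i,b)))"
  have QM: "Q mt = PiM (zIdx K n) M" unfolding Q_def M_def ..
  have Mk: "M k = mu (mt (fst k, fst (snd k)))" unfolding M_def by (cases k) auto
  have ck: "mt (fst k, fst (snd k)) \<in> space D" using k by (intro space_P_D[OF mt]) (auto simp: zIdx_def)
  have Mk_prob: "prob_space (M k)" unfolding Mk by (rule mu_space(1)[OF ck])
  have Mk_sets: "sets (M k) = sets Zm" unfolding Mk by (rule mu_space(2)[OF ck])
  define g where "g zt y = (\<integral>w. loss w y \<partial>A (sample_of K n zt v u))" for zt y
  have gm': "(\<lambda>(x,y). g x y) \<in> borel_measurable (ZM \<Otimes>\<^sub>M Zm)" unfolding g_def by measurable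
  have sets_eq: "sets (PiM (zIdx K n) M \<Otimes>\<^sub>M M k) = sets (ZM \<Otimes>\<^sub>M Zm)"
    unfolding QM[symmetric] by (rule sets_pair_measure_cong[OF Q_sets[OF mt] Mk_sets])
  have gb: "\<bar>g x y\<bar> \<le> B" if x: "x \<in> space (PiM (zIdx K n) M)" and y: "y \<in> space (M k)" for x y
  proof -
    have y'[measurable]: "y \<in> space Zm" using y sets_eq_imp_space_eq[OF Mk_sets] by simp
    have x': "x \<in> space ZM" using x Q_space[OF mt] QM by simp
    have sS: "sample_of K n x v u \<in> space SM" using sample_space[OF x' v u] .
    show ?thesis unfolding g_def
    proof (rule prob_integral_bound[OF A_space(1)[OF sS]])
      show "(\<lambda>w. loss w y) \<in> borel_measurable (A (sample_of K n x v u))"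
        unfolding measurable_cong_sets[OF A_space(2)[OF sS] refl] by measurable
    qed (rule loss_abs)
  qed
  have res: "(\<integral>x. g x (x k) \<partial>PiM (zIdx K n) M) = (\<integral>x. \<integral>y. g x y \<partial>M k \<partial>PiM (zIdx K n) M)"
  proof (rule resample[OF finite_idx(2) k])
    show "prob_space (M i)" if i: "i \<in> zIdx K n" for i
    proof -
      obtain a b j c where ii: "i = (a, b, j, c)" and a: "a < K" using i by (auto simp: zIdx_def)
      show ?thesis unfolding ii M_def using mu_space(1)[OF space_P_D[OF mt a]] by simp
    qed
    show "(\<lambda>(x,y). g x y) \<in> borel_measurable (PiM (zIdx K n) M \<Otimes>\<^sub>M M k)"
      unfolding measurable_cong_sets[OF sets_eq refl] by (rule gm')
    show "\<bar>g x y\<bar> \<le> B" if "x \<in> space (PiM (zIdx K n) M)" "y \<in> space (M k)" for x y using gb that .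
    fix x y y' assume "x \<in> space (PiM (zIdx K n) M)"
    have "sample_of K n (x(k := y')) v u = sample_of K n x v u"
      unfolding sample_of_def
    proof (rule restrict_ext)
      fix p assume "p \<in> sIdx K n"
      then obtain a b where p: "p = (a, b)" and a: "a < K" and b: "b < n" by (auto simp: sIdx_def)
      have "k \<noteq> (a, v a, b, u (a, v a, b))" by (rule unread[OF a b])
      then show "(\<lambda>(i, j). (x(k := y')) (i, v i, j, u (i, v i, j))) p = (\<lambda>(i, j). x (i, v i, j, u (i, v i, j))) p"
        unfolding p by simp
    qed
    then show "g (x(k := y')) y = g x y" unfolding g_def by simp
  qed
  have "(\<integral>zt. \<integral>w. loss w (zt k) \<partial>A (sample_of K n zt v u) \<partial>Q mt) = (\<integral>x. g x (x k) \<partial>PiM (zIdx K n) M)"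
    unfolding QM g_def ..
  also have "\<dots> = (\<integral>x. \<integral>y. g x y \<partial>M k \<partial>PiM (zIdx K n) M)" by (rule res)
  also have "\<dots> = (\<integral>zt. \<integral>w. risk (mu (mt (fst k, fst (snd k)))) loss w \<partial>A (sample_of K n zt v u) \<partial>Q mt)"
    unfolding QM[symmetric]
  proof (rule Bochner_Integration.integral_cong[OF refl])
    fix x assume "x \<in> space (Q mt)"
    then have x: "x \<in> space ZM" using Q_space[OF mt] by simp
    have sS: "sample_of K n x v u \<in> space SM" using sample_space[OF x v u] .
    have "(\<integral>y. g x y \<partial>M k) = (\<integral>y. \<integral>w. loss w y \<partial>A (sample_of K n x v u) \<partial>M k)" unfolding g_def ..
    also have "\<dots> = (\<integral>w. \<integral>y. loss w y \<partial>M k \<partial>A (sample_of K n x v u))"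
    proof (rule swap_int[OF Mk_prob A_space(1)[OF sS]])
      show "(\<lambda>(y, w). loss w y) \<in> borel_measurable (M k \<Otimes>\<^sub>M A (sample_of K n x v u))"
        unfolding measurable_cong_sets[OF sets_pair_measure_cong[OF Mk_sets A_space(2)[OF sS]] refl] by measurable
    qed (rule loss_abs)
    also have "\<dots> = (\<integral>w. risk (mu (mt (fst k, fst (snd k)))) loss w \<partial>A (sample_of K n x v u))"
      unfolding risk_def Mk ..
    finally show "(\<integral>y. g x y \<partial>M k) = (\<integral>w. risk (mu (mt (fst k, fst (snd k)))) loss w \<partial>A (sample_of K n x v u))" .
  qed
  finally show ?thesis .
qed


lemma MT:
  assumes v[measurable]: "v \<in> space Vm" and u[measurable]: "u \<in> space Um" and i: "i < K" and vi: "v i"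
  shows "(\<integral>mt. \<integral>zt. \<integral>w. risk (mu (mt (i, False))) loss w \<partial>A (sample_of K n zt v u) \<partial>Q mt \<partial>P) =
    (\<integral>mt. \<integral>zt. \<integral>w. pop_risk D mu loss w \<partial>A (sample_of K n zt v u) \<partial>Q mt \<partial>P)"
proof -
  define J where "J = {k \<in> zIdx K n. (fst k, fst (snd k)) \<noteq> (i, False)}"
  define M where "M mt = (\<lambda>(i::nat,b::bool,j::nat,c::bool). mu (mt (i,b)))" for mt :: "nat \<times> bool \<Rightarrow> 'c"
  have QM: "Q mt = PiM (zIdx K n) (M mt)" for mt unfolding Q_def M_def ..
  have J_sub: "J \<subseteq> zIdx K n" unfolding J_def by auto
  have readJ: "(a, v a, b, u (a, v a, b)) \<in> J" if "a < K" "b < n" for a b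
    using that vi by (auto simp: J_def zIdx_def)
  have sampJ: "sample_of K n (restrict x J) v u = sample_of K n x v u" for x
    unfolding sample_of_def by (rule restrict_ext) (auto simp: sIdx_def readJ)
  have sampJ_m[measurable]: "(\<lambda>y. sample_of K n y v u) \<in> PiM J (\<lambda>_. Zm) \<rightarrow>\<^sub>M SM"
    unfolding sample_of_def SM_def
  proof (rule measurable_restrict)
    fix p assume "p \<in> sIdx K n"
    then obtain a b where p: "p = (a, b)" and a: "a < K" and b: "b < n" by (auto simp: sIdx_def)
    show "(\<lambda>y. (\<lambda>(i, j). y (i, v i, j, u (i, v i, j))) p) \<in> PiM J (\<lambda>_. Zm) \<rightarrow>\<^sub>M Zm"
      unfolding p using measurable_component_singleton[OF readJ[OF a b], of "\<lambda>_. Zm"] by simp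
  qed
  have M_prob: "prob_space (M mt k)" if mt: "mt \<in> space P" and k: "k \<in> zIdx K n" for mt k
  proof -
    obtain a b j c where kk: "k = (a, b, j, c)" and a: "a < K" using k by (auto simp: zIdx_def)
    show ?thesis unfolding kk M_def using mu_space(1)[OF space_P_D[OF mt a]] by simp
  qed
  have M_sets: "sets (PiM J (M mt)) = sets (PiM J (\<lambda>_. Zm))" if mt: "mt \<in> space P" for mt
  proof (rule sets_PiM_cong[OF refl])
    fix k assume "k \<in> J"
    then obtain a b j c where kk: "k = (a, b, j, c)" and a: "a < K" by (auto simp: J_def zIdx_def)
    show "sets (M mt k) = sets Zm" unfolding kk M_def using mu_space(2)[OF space_P_D[OF mt a]] by simp
  qed
  define H where "H c zt = (\<integral>w. risk (mu c) loss w \<partial>A (sample_of K n zt v u))" for c zt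
  define g where "g mt c = (\<integral>zt. H c zt \<partial>Q mt)" for mt c
  have HJ: "g mt c = (\<integral>zt. H c zt \<partial>PiM J (M mt))" if mt: "mt \<in> space P" and c[measurable]: "c \<in> space D" for mt c
    unfolding g_def QM
  proof (rule restrict_int[OF finite_idx(2) J_sub M_prob[OF mt]])
    show "H c \<in> borel_measurable (PiM J (M mt))"
      unfolding measurable_cong_sets[OF M_sets[OF mt] refl] H_def by measurable
    show "H c (restrict x J) = H c x" for x unfolding H_def sampJ ..
  qed
  define k0 where "k0 = (i, False)"
  have k0: "k0 \<in> clientIdx K" using i by (simp add: k0_def clientIdx_def)
  have ginv: "g (mt(k0 := c')) c = g mt c" if mt: "mt \<in> space P" and c: "c \<in> space D" and c': "c' \<in> space D" for mt c c'
  proof -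
    have mt': "mt(k0 := c') \<in> space P" using mt c' k0 by (auto simp: P_def space_PiM PiE_iff extensional_def)
    have "PiM J (M (mt(k0 := c'))) = PiM J (M mt)"
    proof (rule PiM_cong[OF refl])
      fix k assume kJ: "k \<in> J"
      obtain a b j cc where kk: "k = (a, b, j, cc)" by (cases k)
      have ab: "(a, b) \<noteq> k0" using kJ kk by (auto simp: J_def k0_def)
      show "M (mt(k0 := c')) k = M mt k" unfolding kk M_def using ab by simp
    qed
    then show ?thesis using HJ[OF mt c] HJ[OF mt' c] by simp
  qed
  have gm: "(\<lambda>(mt, c). g mt c) \<in> borel_measurable (P \<Otimes>\<^sub>M D)" unfolding g_def H_def by measurable
  have gb: "\<bar>g mt c\<bar> \<le> B" if mt: "mt \<in> space P" and c[measurable]: "c \<in> space D" for mt c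
    unfolding g_def
  proof (rule prob_integral_bound[OF Q_prob[OF mt]])
    show "H c \<in> borel_measurable (Q mt)" unfolding measurable_cong_sets[OF Q_sets[OF mt] refl] H_def by measurable
    fix zt assume "zt \<in> space (Q mt)"
    then have zt: "zt \<in> space ZM" using Q_space[OF mt] by simp
    have sS: "sample_of K n zt v u \<in> space SM" using sample_space[OF zt v u] .
    show "\<bar>H c zt\<bar> \<le> B" unfolding H_def
    proof (rule prob_integral_bound[OF A_space(1)[OF sS]])
      show "(\<lambda>w. risk (mu c) loss w) \<in> borel_measurable (A (sample_of K n zt v u))"
        unfolding measurable_cong_sets[OF A_space(2)[OF sS] refl] by measurable
      fix w assume "w \<in> space (A (sample_of K n zt v u))"
      then have "w \<in> space Wm" using sets_eq_imp_space_eq[OF A_space(2)[OF sS]] by simp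
      then show "\<bar>risk (mu c) loss w\<bar> \<le> B" by (rule risk_bound[OF c])
    qed
  qed
  have res: "(\<integral>mt. g mt (mt k0) \<partial>P) = (\<integral>mt. \<integral>c. g mt c \<partial>D \<partial>P)"
    unfolding P_def
  proof (rule resample[OF finite_idx(1) k0])
    show "prob_space D" by (rule D)
    show "(\<lambda>(x, y). g x y) \<in> borel_measurable (PiM (clientIdx K) (\<lambda>_. D) \<Otimes>\<^sub>M D)" using gm unfolding P_def .
    show "\<bar>g x y\<bar> \<le> B" if "x \<in> space (PiM (clientIdx K) (\<lambda>_. D))" "y \<in> space D" for x y
      using gb that unfolding P_def by blast
    show "g (x(k0 := y')) y = g x y" if "x \<in> space (PiM (clientIdx K) (\<lambda>_. D))" "y \<in> space D" "y' \<in> space D" for x y y'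
      using ginv that unfolding P_def by blast
  qed
  have "(\<integral>mt. \<integral>zt. \<integral>w. risk (mu (mt (i, False))) loss w \<partial>A (sample_of K n zt v u) \<partial>Q mt \<partial>P) =
      (\<integral>mt. g mt (mt k0) \<partial>P)" unfolding g_def H_def k0_def ..
  also have "\<dots> = (\<integral>mt. \<integral>c. g mt c \<partial>D \<partial>P)" by (rule res)
  also have "\<dots> = (\<integral>mt. \<integral>zt. \<integral>w. pop_risk D mu loss w \<partial>A (sample_of K n zt v u) \<partial>Q mt \<partial>P)"
  proof (rule Bochner_Integration.integral_cong[OF refl])
    fix mt assume mt[measurable]: "mt \<in> space P"
    have "(\<integral>c. g mt c \<partial>D) = (\<integral>zt. \<integral>c. H c zt \<partial>D \<partial>Q mt)"
      unfolding g_def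
    proof (rule swap_int[OF D Q_prob[OF mt]])
      show "(\<lambda>(c, zt). H c zt) \<in> borel_measurable (D \<Otimes>\<^sub>M Q mt)"
        unfolding measurable_cong_sets[OF sets_pair_measure_cong[OF refl Q_sets[OF mt]] refl] H_def by measurable
      fix c zt assume c: "c \<in> space D" and "zt \<in> space (Q mt)"
      then have zt: "zt \<in> space ZM" using Q_space[OF mt] by simp
      have sS: "sample_of K n zt v u \<in> space SM" using sample_space[OF zt v u] .
      show "\<bar>H c zt\<bar> \<le> B" unfolding H_def
      proof (rule prob_integral_bound[OF A_space(1)[OF sS]])
        show "(\<lambda>w. risk (mu c) loss w) \<in> borel_measurable (A (sample_of K n zt v u))"
          unfolding measurable_cong_sets[OF A_space(2)[OF sS] refl] using c by measurable
        fix w assume "w \<in> space (A (sample_of K n zt v u))"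
        then have "w \<in> space Wm" using sets_eq_imp_space_eq[OF A_space(2)[OF sS]] by simp
        then show "\<bar>risk (mu c) loss w\<bar> \<le> B" by (rule risk_bound[OF c])
      qed
    qed
    also have "\<dots> = (\<integral>zt. \<integral>w. pop_risk D mu loss w \<partial>A (sample_of K n zt v u) \<partial>Q mt)"
    proof (rule Bochner_Integration.integral_cong[OF refl])
      fix zt assume "zt \<in> space (Q mt)"
      then have zt: "zt \<in> space ZM" using Q_space[OF mt] by simp
      have sS: "sample_of K n zt v u \<in> space SM" using sample_space[OF zt v u] .
      show "(\<integral>c. H c zt \<partial>D) = (\<integral>w. pop_risk D mu loss w \<partial>A (sample_of K n zt v u))"
        unfolding H_def pop_risk_def
      proof (rule swap_int[OF D A_space(1)[OF sS]])
        show "(\<lambda>(c, w). risk (mu c) loss w) \<in> borel_measurable (D \<Otimes>\<^sub>M A (sample_of K n zt v u))"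
          unfolding measurable_cong_sets[OF sets_pair_measure_cong[OF refl A_space(2)[OF sS]] refl] by measurable
        fix c w assume c: "c \<in> space D" and "w \<in> space (A (sample_of K n zt v u))"
        then have "w \<in> space Wm" using sets_eq_imp_space_eq[OF A_space(2)[OF sS]] by simp
        then show "\<bar>risk (mu c) loss w\<bar> \<le> B" by (rule risk_bound[OF c])
      qed
    qed
    finally show "(\<integral>c. g mt c \<partial>D) = (\<integral>zt. \<integral>w. pop_risk D mu loss w \<partial>A (sample_of K n zt v u) \<partial>Q mt)" .
  qed
  finally show ?thesis .
qed

end



context fl
begin

abbreviation "EE f \<equiv> integral\<^sup>L (fl_joint D mu Zm Wm A K n) f"

lemma E_integrable:
  fixes f :: "_ \<Rightarrow> real"
  assumes f: "f \<in> borel_measurable OM" and fb: "\<And>x. x \<in> space OM \<Longrightarrow> \<bar>f x\<bar> \<le> C"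
  shows "integrable (fl_joint D mu Zm Wm A K n) f"
  unfolding fl_eq
proof (rule integrable_bind[OF f fb K2_m])
  show "finite_measure P" using prob_spaces(1) unfolding prob_space_def by simp
  show "AE x in P. emeasure (Q x \<bind> (\<lambda>zt. Vm \<bind> (\<lambda>v. Um \<bind> (\<lambda>u. A (sample_of K n zt v u) \<bind>
      (\<lambda>w. return OM (x, zt, v, u, w))))))
     (space (Q x \<bind> (\<lambda>zt. Vm \<bind> (\<lambda>v. Um \<bind> (\<lambda>u. A (sample_of K n zt v u) \<bind> (\<lambda>w. return OM (x, zt, v, u, w)))))))
     \<le> ennreal 1"
    by (rule AE_I2) (use subprob_space_kernel[OF K2_m] in \<open>simp add: subprob_space.subprob_emeasure_le_1\<close>)
qed

lemma predV: "g \<in> N \<rightarrow>\<^sub>M Vm \<Longrightarrow> a < K \<Longrightarrow> Measurable.pred N (\<lambda>x. g x a)"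
  unfolding Vm_def by (erule coin_comp) simp

lemma predU2:
  assumes g: "g \<in> N \<rightarrow>\<^sub>M Um" and h: "Measurable.pred N h" and a: "a < K" and b: "b < n"
  shows "Measurable.pred N (\<lambda>x. g x (a, h x, b))"
proof -
  have eq: "g x (a, h x, b) = (if h x then g x (a, True, b) else g x (a, False, b))" for x by simp
  have c: "(\<lambda>x. g x (a, c, b)) \<in> N \<rightarrow>\<^sub>M count_space UNIV" for c
    using g a b unfolding Um_def by (intro coin_comp) (auto simp: uIdx_def)
  show ?thesis unfolding eq by (rule measurable_If[OF c c]) (use h in \<open>simp add: pred_def\<close>)
qed

lemma ztSel:
  assumes f: "f \<in> N \<rightarrow>\<^sub>M ZM" and h1: "Measurable.pred N h1" and h2: "Measurable.pred N h2" and a: "a < K" and b: "b < n"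
  shows "(\<lambda>x. f x (a, h1 x, b, h2 x)) \<in> N \<rightarrow>\<^sub>M Zm"
proof -
  have eq: "f x (a, h1 x, b, h2 x) = (if h1 x then (if h2 x then f x (a, True, b, True) else f x (a, True, b, False))
     else (if h2 x then f x (a, False, b, True) else f x (a, False, b, False)))" for x by simp
  have c: "(\<lambda>x. f x (a, c, b, d)) \<in> N \<rightarrow>\<^sub>M Zm" for c d
    using measurable_compose[OF f[unfolded ZM_def] measurable_component_singleton[of "(a, c, b, d)" "zIdx K n" "\<lambda>_. Zm"]] a b
    by (simp add: zIdx_def)
  have s1: "{x \<in> space N. h1 x} \<in> sets N" and s2: "{x \<in> space N. h2 x} \<in> sets N"
    using h1 h2 by (simp_all add: pred_def)
  show ?thesis unfolding eq by (intro measurable_If c s1 s2)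
qed

lemma mtSel:
  assumes f: "f \<in> N \<rightarrow>\<^sub>M P" and h: "Measurable.pred N h" and a: "a < K"
  shows "(\<lambda>x. f x (a, h x)) \<in> N \<rightarrow>\<^sub>M D"
proof -
  have eq: "f x (a, h x) = (if h x then f x (a, True) else f x (a, False))" for x by simp
  have c: "(\<lambda>x. f x (a, c)) \<in> N \<rightarrow>\<^sub>M D" for c
    using measurable_compose[OF f[unfolded P_def] measurable_component_singleton[of "(a, c)" "clientIdx K" "\<lambda>_. D"]] a
    by (simp add: clientIdx_def)
  have s: "{x \<in> space N. h x} \<in> sets N" using h by (simp add: pred_def)
  show ?thesis unfolding eq by (intro measurable_If c s)
qed

lemma space_OM: "x \<in> space OM \<longleftrightarrow> fst x \<in> space P \<and> fst (snd x) \<in> space ZM \<and> fst (snd (snd x)) \<in> space Vm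
   \<and> fst (snd (snd (snd x))) \<in> space Um \<and> snd (snd (snd (snd x))) \<in> space Wm"
  by (cases x) (auto simp: OM_eq space_pair_measure)

lemma E_lin2:
  fixes f g :: "_ \<Rightarrow> real"
  assumes "integrable (fl_joint D mu Zm Wm A K n) f" "integrable (fl_joint D mu Zm Wm A K n) g"
  shows "EE (\<lambda>x. a * f x + b * g x) = a * EE f + b * EE g"
  using assms by simp


lemma ob_bound: "\<bar>x\<bar> \<le> B \<Longrightarrow> \<bar>of_bool b * x\<bar> \<le> B" for x :: real
  by (cases b) (simp_all add: B_nonneg)

lemma risk_bound_OM: "(mt, zt, v, u, w) \<in> space OM \<Longrightarrow> a < K \<Longrightarrow> \<bar>risk (mu (mt (a, b))) loss w\<bar> \<le> B"
  by (rule risk_bound) (auto simp: space_OM intro: space_P_D)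

lemma pop_bound_OM: "(mt, zt, v, u, w) \<in> space OM \<Longrightarrow> \<bar>pop_risk D mu loss w\<bar> \<le> B"
  by (rule pop_bound) (auto simp: space_OM)

context
  fixes i :: nat assumes i: "i < K"
begin

lemmas p1_rules[measurable (raw)] = predV[OF _ i] predU2[OF _ _ i npos] ztSel[OF _ _ _ i npos] mtSel[OF _ _ i]

lemma kz: "(i, False, 0, c) \<in> zIdx K n" using i npos by (simp add: zIdx_def)

definition "F1 = (\<lambda>(mt,zt,v,u,w). of_bool (v i) * loss w (zt (i, False, 0, \<not> u (i, False, 0))))"
definition "F2 = (\<lambda>(mt,zt,v,u,w). of_bool (\<not> v i) * loss w (zt (i, False, 0, \<not> u (i, False, 0))))"
definition "F3 = (\<lambda>(mt,zt,v,u,w). of_bool (v i) * pop_risk D mu loss w)"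
definition "F4 = (\<lambda>(mt,zt,v,u,w). of_bool (\<not> v i) * pop_risk D mu loss w)"
definition "F5 = (\<lambda>(mt,zt,v,u,w). of_bool (v i) * risk (mu (mt (i, v i))) loss w)"
definition "F6 = (\<lambda>(mt,zt,v,u,w). of_bool (\<not> v i) * risk (mu (mt (i, v i))) loss w)"

lemma F_meas: "F1 \<in> borel_measurable OM" "F2 \<in> borel_measurable OM" "F3 \<in> borel_measurable OM"
  "F4 \<in> borel_measurable OM" "F5 \<in> borel_measurable OM" "F6 \<in> borel_measurable OM"
  unfolding F1_def F2_def F3_def F4_def F5_def F6_def OM_eq by measurable

lemma F_bound: "x \<in> space OM \<Longrightarrow> \<bar>F1 x\<bar> \<le> B" "x \<in> space OM \<Longrightarrow> \<bar>F2 x\<bar> \<le> B"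
  "x \<in> space OM \<Longrightarrow> \<bar>F3 x\<bar> \<le> B" "x \<in> space OM \<Longrightarrow> \<bar>F4 x\<bar> \<le> B"
  "x \<in> space OM \<Longrightarrow> \<bar>F5 x\<bar> \<le> B" "x \<in> space OM \<Longrightarrow> \<bar>F6 x\<bar> \<le> B"
  unfolding F1_def F2_def F3_def F4_def F5_def F6_def
  by (auto split: prod.splits intro!: ob_bound loss_abs pop_bound_OM risk_bound_OM i simp: B_nonneg)

lemma A1: "EE F1 = EE F3"
proof (rule E_congN[OF F_meas(1) F_bound(1) F_meas(3) F_bound(3)])
  fix v u assume v: "v \<in> space Vm" and u: "u \<in> space Um"
  show "(\<integral>mt. \<integral>zt. Gw F1 mt zt v u \<partial>Q mt \<partial>P) = (\<integral>mt. \<integral>zt. Gw F3 mt zt v u \<partial>Q mt \<partial>P)"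
  proof (cases "v i")
    case False then show ?thesis by (simp add: Gw_def F1_def F3_def)
  next
    case True
    have unr: "(i, False, 0, \<not> u (i, False, 0)) \<noteq> (a, v a, b, u (a, v a, b))" for a b using True by auto
    have "(\<integral>mt. \<integral>zt. Gw F1 mt zt v u \<partial>Q mt \<partial>P) =
       (\<integral>mt. \<integral>zt. \<integral>w. loss w (zt (i, False, 0, \<not> u (i, False, 0))) \<partial>A (sample_of K n zt v u) \<partial>Q mt \<partial>P)"
      by (simp add: Gw_def F1_def True)
    also have "\<dots> = (\<integral>mt. \<integral>zt. \<integral>w. risk (mu (mt (i, False))) loss w \<partial>A (sample_of K n zt v u) \<partial>Q mt \<partial>P)"
    proof (rule Bochner_Integration.integral_cong[OF refl])
      fix mt assume mt: "mt \<in> space P"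
      show "(\<integral>zt. \<integral>w. loss w (zt (i, False, 0, \<not> u (i, False, 0))) \<partial>A (sample_of K n zt v u) \<partial>Q mt) =
          (\<integral>zt. \<integral>w. risk (mu (mt (i, False))) loss w \<partial>A (sample_of K n zt v u) \<partial>Q mt)"
        using TP[OF v u kz unr mt] by simp
    qed
    also have "\<dots> = (\<integral>mt. \<integral>zt. \<integral>w. pop_risk D mu loss w \<partial>A (sample_of K n zt v u) \<partial>Q mt \<partial>P)"
      by (rule MT[OF v u i True])
    also have "\<dots> = (\<integral>mt. \<integral>zt. Gw F3 mt zt v u \<partial>Q mt \<partial>P)"
      by (simp add: Gw_def F3_def True)
    finally show ?thesis .
  qed
qed

lemma A2: "EE F2 = EE F6"
proof (rule E_congN[OF F_meas(2) F_bound(2) F_meas(6) F_bound(6)])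
  fix v u assume v: "v \<in> space Vm" and u: "u \<in> space Um"
  show "(\<integral>mt. \<integral>zt. Gw F2 mt zt v u \<partial>Q mt \<partial>P) = (\<integral>mt. \<integral>zt. Gw F6 mt zt v u \<partial>Q mt \<partial>P)"
  proof (cases "v i")
    case True then show ?thesis by (simp add: Gw_def F2_def F6_def)
  next
    case False
    have unr: "(i, False, 0, \<not> u (i, False, 0)) \<noteq> (a, v a, b, u (a, v a, b))" for a b using False by auto
    have "(\<integral>mt. \<integral>zt. Gw F2 mt zt v u \<partial>Q mt \<partial>P) =
       (\<integral>mt. \<integral>zt. \<integral>w. loss w (zt (i, False, 0, \<not> u (i, False, 0))) \<partial>A (sample_of K n zt v u) \<partial>Q mt \<partial>P)"
      by (simp add: Gw_def F2_def False)
    also have "\<dots> = (\<integral>mt. \<integral>zt. \<integral>w. risk (mu (mt (i, False))) loss w \<partial>A (sample_of K n zt v u) \<partial>Q mt \<partial>P)"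
    proof (rule Bochner_Integration.integral_cong[OF refl])
      fix mt assume mt: "mt \<in> space P"
      show "(\<integral>zt. \<integral>w. loss w (zt (i, False, 0, \<not> u (i, False, 0))) \<partial>A (sample_of K n zt v u) \<partial>Q mt) =
          (\<integral>zt. \<integral>w. risk (mu (mt (i, False))) loss w \<partial>A (sample_of K n zt v u) \<partial>Q mt)"
        using TP[OF v u kz unr mt] by simp
    qed
    also have "\<dots> = (\<integral>mt. \<integral>zt. Gw F6 mt zt v u \<partial>Q mt \<partial>P)"
      by (simp add: Gw_def F6_def False)
    finally show ?thesis .
  qed
qed

lemma A3: "EE F3 = EE F4"
proof (rule symT[OF F_meas(4) F_bound(4) F_meas(3) F_bound(3)])
  fix mt zt v u w assume "v \<in> space Vm"
  show "F3 (mt, zt, v, u, w) = F4 (\<lambda>k\<in>clientIdx K. mt ((\<lambda>(i,b). (i, \<not> b)) k), \<lambda>k\<in>zIdx K n. zt ((\<lambda>(i,b,j,c). (i, \<not> b, j, c)) k),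
          \<lambda>i\<in>{..<K}. \<not> v i, \<lambda>k\<in>uIdx K n. u ((\<lambda>(i,b,j). (i, \<not> b, j)) k), w)"
    using i by (simp add: F3_def F4_def)
qed

lemma A4: "EE F5 = EE F6"
proof (rule symT[OF F_meas(6) F_bound(6) F_meas(5) F_bound(5)])
  fix mt zt v u w assume "v \<in> space Vm"
  show "F5 (mt, zt, v, u, w) = F6 (\<lambda>k\<in>clientIdx K. mt ((\<lambda>(i,b). (i, \<not> b)) k), \<lambda>k\<in>zIdx K n. zt ((\<lambda>(i,b,j,c). (i, \<not> b, j, c)) k),
          \<lambda>i\<in>{..<K}. \<not> v i, \<lambda>k\<in>uIdx K n. u ((\<lambda>(i,b,j). (i, \<not> b, j)) k), w)"
    using i by (simp add: F5_def F6_def clientIdx_def)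
qed


lemma part1_i:
  assumes C: "0 < C1"
  shows "(2 + C1) * EE (\<lambda>(mt,zt,v,u,w). ((-1::real) ^ (1 - of_bool (v i)) - C1 / (C1 + 2)) * loss w (zt (i, False, 0, \<not> u (i, False, 0))))
    = EE (\<lambda>(mt,zt,v,u,w). pop_risk D mu loss w) - (1 + C1) * EE (\<lambda>(mt,zt,v,u,w). risk (mu (mt (i, v i))) loss w)"
proof -
  define c where "c = C1 / (C1 + 2)"
  have I1: "integrable (fl_joint D mu Zm Wm A K n) F1" by (rule E_integrable[OF F_meas(1) F_bound(1)])
  have I2: "integrable (fl_joint D mu Zm Wm A K n) F2" by (rule E_integrable[OF F_meas(2) F_bound(2)])
  have I3: "integrable (fl_joint D mu Zm Wm A K n) F3" by (rule E_integrable[OF F_meas(3) F_bound(3)])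
  have I4: "integrable (fl_joint D mu Zm Wm A K n) F4" by (rule E_integrable[OF F_meas(4) F_bound(4)])
  have I5: "integrable (fl_joint D mu Zm Wm A K n) F5" by (rule E_integrable[OF F_meas(5) F_bound(5)])
  have I6: "integrable (fl_joint D mu Zm Wm A K n) F6" by (rule E_integrable[OF F_meas(6) F_bound(6)])
  have e1: "(\<lambda>(mt,zt,v,u,w). ((-1::real) ^ (1 - of_bool (v i)) - C1 / (C1 + 2)) * loss w (zt (i, False, 0, \<not> u (i, False, 0))))
      = (\<lambda>x. (1 - c) * F1 x + (-1 - c) * F2 x)"
    unfolding F1_def F2_def c_def by (rule ext) (auto split: prod.splits simp: algebra_simps of_bool_def)
  have e2: "(\<lambda>(mt,zt,v,u,w). pop_risk D mu loss w) = (\<lambda>x. 1 * F3 x + 1 * F4 x)"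
    by (rule ext) (auto simp: F3_def F4_def split: prod.splits)
  have e3: "(\<lambda>(mt,zt,v,u,w). risk (mu (mt (i, v i))) loss w) = (\<lambda>x. 1 * F5 x + 1 * F6 x)"
    by (rule ext) (auto simp: F5_def F6_def split: prod.splits)
  have E1: "EE (\<lambda>(mt,zt,v,u,w). ((-1::real) ^ (1 - of_bool (v i)) - C1 / (C1 + 2)) * loss w (zt (i, False, 0, \<not> u (i, False, 0))))
      = (1 - c) * EE F3 + (-1 - c) * EE F6"
    unfolding e1 E_lin2[OF I1 I2] A1 A2 ..
  have E2: "EE (\<lambda>(mt,zt,v,u,w). pop_risk D mu loss w) = 2 * EE F3"
    unfolding e2 E_lin2[OF I3 I4] A3 by simp
  have E3: "EE (\<lambda>(mt,zt,v,u,w). risk (mu (mt (i, v i))) loss w) = 2 * EE F6"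
    unfolding e3 E_lin2[OF I5 I6] A4 by simp
  have c1: "(2 + C1) * (1 - c) = 2" and c2: "(2 + C1) * (-1 - c) = - 2 * (1 + C1)"
    using C by (simp_all add: c_def field_simps)
  show ?thesis unfolding E1 E2 E3
    by (simp add: distrib_left mult.assoc[symmetric] c1 c2) (simp add: algebra_simps)
qed


end

context
  fixes i j :: nat assumes i: "i < K" and j: "j < n"
begin

lemmas p2_rules[measurable (raw)] = predV[OF _ i] predU2[OF _ _ i j] ztSel[OF _ _ _ i j] mtSel[OF _ _ i]

definition "G1 = (\<lambda>(mt,zt,v,u,w). of_bool (u (i, v i, j)) * loss w (zt (i, v i, j, False)))"
definition "G2 = (\<lambda>(mt,zt,v,u,w). of_bool (\<not> u (i, v i, j)) * loss w (zt (i, v i, j, False)))"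
definition "G3 = (\<lambda>(mt,zt,v,u,w). of_bool (u (i, v i, j)) * risk (mu (mt (i, v i))) loss w)"
definition "G4 = (\<lambda>(mt,zt,v,u,w). of_bool (\<not> u (i, v i, j)) * risk (mu (mt (i, v i))) loss w)"
definition "G5 = (\<lambda>(mt,zt,v,u,w). of_bool (u (i, v i, j)) * loss w (zt (i, v i, j, u (i, v i, j))))"
definition "G6 = (\<lambda>(mt,zt,v,u,w). of_bool (\<not> u (i, v i, j)) * loss w (zt (i, v i, j, u (i, v i, j))))"

lemma G_meas: "G1 \<in> borel_measurable OM" "G2 \<in> borel_measurable OM" "G3 \<in> borel_measurable OM"
  "G4 \<in> borel_measurable OM" "G5 \<in> borel_measurable OM" "G6 \<in> borel_measurable OM"
  unfolding G1_def G2_def G3_def G4_def G5_def G6_def OM_eq by measurable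

lemma G_bound: "x \<in> space OM \<Longrightarrow> \<bar>G1 x\<bar> \<le> B" "x \<in> space OM \<Longrightarrow> \<bar>G2 x\<bar> \<le> B"
  "x \<in> space OM \<Longrightarrow> \<bar>G3 x\<bar> \<le> B" "x \<in> space OM \<Longrightarrow> \<bar>G4 x\<bar> \<le> B"
  "x \<in> space OM \<Longrightarrow> \<bar>G5 x\<bar> \<le> B" "x \<in> space OM \<Longrightarrow> \<bar>G6 x\<bar> \<le> B"
  unfolding G1_def G2_def G3_def G4_def G5_def G6_def
  by (auto split: prod.splits intro!: ob_bound loss_abs risk_bound_OM i simp: B_nonneg)

lemma B1: "EE G1 = EE G3"
proof (rule E_congN[OF G_meas(1) G_bound(1) G_meas(3) G_bound(3)])
  fix v u assume v: "v \<in> space Vm" and u: "u \<in> space Um"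
  show "(\<integral>mt. \<integral>zt. Gw G1 mt zt v u \<partial>Q mt \<partial>P) = (\<integral>mt. \<integral>zt. Gw G3 mt zt v u \<partial>Q mt \<partial>P)"
  proof (cases "u (i, v i, j)")
    case False then show ?thesis by (simp add: Gw_def G1_def G3_def)
  next
    case True
    have kz: "(i, v i, j, False) \<in> zIdx K n" using i j by (simp add: zIdx_def)
    have unr: "(i, v i, j, False) \<noteq> (a, v a, b, u (a, v a, b))" for a b using True by auto
    have "(\<integral>mt. \<integral>zt. Gw G1 mt zt v u \<partial>Q mt \<partial>P) =
       (\<integral>mt. \<integral>zt. \<integral>w. loss w (zt (i, v i, j, False)) \<partial>A (sample_of K n zt v u) \<partial>Q mt \<partial>P)"
      by (simp add: Gw_def G1_def True)
    also have "\<dots> = (\<integral>mt. \<integral>zt. \<integral>w. risk (mu (mt (i, v i))) loss w \<partial>A (sample_of K n zt v u) \<partial>Q mt \<partial>P)"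
    proof (rule Bochner_Integration.integral_cong[OF refl])
      fix mt assume mt: "mt \<in> space P"
      show "(\<integral>zt. \<integral>w. loss w (zt (i, v i, j, False)) \<partial>A (sample_of K n zt v u) \<partial>Q mt) =
          (\<integral>zt. \<integral>w. risk (mu (mt (i, v i))) loss w \<partial>A (sample_of K n zt v u) \<partial>Q mt)"
        using TP[OF v u kz unr mt] by simp
    qed
    also have "\<dots> = (\<integral>mt. \<integral>zt. Gw G3 mt zt v u \<partial>Q mt \<partial>P)"
      by (simp add: Gw_def G3_def True)
    finally show ?thesis .
  qed
qed

lemma B2: "G2 = G6"
  unfolding G2_def G6_def by (rule ext) (auto split: prod.splits simp: of_bool_def)

lemma B3: "EE G3 = EE G4"
proof (rule symR[OF G_meas(4) G_bound(4) G_meas(3) G_bound(3)])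
  fix mt zt v u w assume "v \<in> space Vm"
  show "G3 (mt, zt, v, u, w) = G4 (\<lambda>k\<in>clientIdx K. mt k, \<lambda>k\<in>zIdx K n. zt ((\<lambda>(i,b,j,c). (i, b, j, \<not> c)) k),
          v, \<lambda>k\<in>uIdx K n. \<not> u k, w)"
    using i j by (simp add: G3_def G4_def clientIdx_def uIdx_def)
qed

lemma B4: "EE G5 = EE G6"
proof (rule symR[OF G_meas(6) G_bound(6) G_meas(5) G_bound(5)])
  fix mt zt v u w assume "v \<in> space Vm"
  show "G5 (mt, zt, v, u, w) = G6 (\<lambda>k\<in>clientIdx K. mt k, \<lambda>k\<in>zIdx K n. zt ((\<lambda>(i,b,j,c). (i, b, j, \<not> c)) k),
          v, \<lambda>k\<in>uIdx K n. \<not> u k, w)"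
    using i j by (simp add: G5_def G6_def zIdx_def uIdx_def)
qed

lemma part2_ij:
  assumes C: "0 < C2"
  shows "(2 + C2) * EE (\<lambda>(mt,zt,v,u,w). ((-1::real) ^ (1 - of_bool (u (i, v i, j))) - C2 / (C2 + 2)) * loss w (zt (i, v i, j, False)))
    = EE (\<lambda>(mt,zt,v,u,w). risk (mu (mt (i, v i))) loss w) - (1 + C2) * EE (\<lambda>(mt,zt,v,u,w). loss w (zt (i, v i, j, u (i, v i, j))))"
proof -
  define c where "c = C2 / (C2 + 2)"
  have I1: "integrable (fl_joint D mu Zm Wm A K n) G1" by (rule E_integrable[OF G_meas(1) G_bound(1)])
  have I2: "integrable (fl_joint D mu Zm Wm A K n) G2" by (rule E_integrable[OF G_meas(2) G_bound(2)])
  have I3: "integrable (fl_joint D mu Zm Wm A K n) G3" by (rule E_integrable[OF G_meas(3) G_bound(3)])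
  have I4: "integrable (fl_joint D mu Zm Wm A K n) G4" by (rule E_integrable[OF G_meas(4) G_bound(4)])
  have I5: "integrable (fl_joint D mu Zm Wm A K n) G5" by (rule E_integrable[OF G_meas(5) G_bound(5)])
  have I6: "integrable (fl_joint D mu Zm Wm A K n) G6" by (rule E_integrable[OF G_meas(6) G_bound(6)])
  have e1: "(\<lambda>(mt,zt,v,u,w). ((-1::real) ^ (1 - of_bool (u (i, v i, j))) - C2 / (C2 + 2)) * loss w (zt (i, v i, j, False)))
      = (\<lambda>x. (1 - c) * G1 x + (-1 - c) * G2 x)"
    unfolding G1_def G2_def c_def by (rule ext) (auto split: prod.splits simp: algebra_simps of_bool_def)
  have e2: "(\<lambda>(mt,zt,v,u,w). risk (mu (mt (i, v i))) loss w) = (\<lambda>x. 1 * G3 x + 1 * G4 x)"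
    by (rule ext) (auto simp: G3_def G4_def split: prod.splits)
  have e3: "(\<lambda>(mt,zt,v,u,w). loss w (zt (i, v i, j, u (i, v i, j)))) = (\<lambda>x. 1 * G5 x + 1 * G6 x)"
    by (rule ext) (auto simp: G5_def G6_def split: prod.splits)
  have E1: "EE (\<lambda>(mt,zt,v,u,w). ((-1::real) ^ (1 - of_bool (u (i, v i, j))) - C2 / (C2 + 2)) * loss w (zt (i, v i, j, False)))
      = (1 - c) * EE G3 + (-1 - c) * EE G6"
    unfolding e1 E_lin2[OF I1 I2] B1 by (simp add: B2)
  have E2: "EE (\<lambda>(mt,zt,v,u,w). risk (mu (mt (i, v i))) loss w) = 2 * EE G3"
    unfolding e2 E_lin2[OF I3 I4] B3 by simp
  have E3: "EE (\<lambda>(mt,zt,v,u,w). loss w (zt (i, v i, j, u (i, v i, j)))) = 2 * EE G6"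
    unfolding e3 E_lin2[OF I5 I6] B4 by simp
  have c1: "(2 + C2) * (1 - c) = 2" and c2: "(2 + C2) * (-1 - c) = - 2 * (1 + C2)"
    using C by (simp_all add: c_def field_simps)
  show ?thesis unfolding E1 E2 E3
    by (simp add: distrib_left mult.assoc[symmetric] c1 c2) (simp add: algebra_simps)
qed


end

definition "ri i = (\<lambda>(mt,zt,v,u,w). risk (mu (mt (i, v i))) loss w)"
definition "Zf i j = (\<lambda>(mt,zt,v,u,w). loss w (zt (i, v i, j, u (i, v i, j))))"

lemma ri_int: "i < K \<Longrightarrow> integrable (fl_joint D mu Zm Wm A K n) (ri i)"
proof -
  assume i: "i < K"
  note predV[OF _ i, measurable (raw)] mtSel[OF _ _ i, measurable (raw)]
  have m: "ri i \<in> borel_measurable OM" unfolding ri_def OM_eq by measurable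
  show ?thesis by (rule E_integrable[OF m]) (auto simp: ri_def i split: prod.splits intro: risk_bound_OM)
qed

lemma Zf_int: "i < K \<Longrightarrow> j < n \<Longrightarrow> integrable (fl_joint D mu Zm Wm A K n) (Zf i j)"
proof -
  assume i: "i < K" and j: "j < n"
  note predV[OF _ i, measurable (raw)] predU2[OF _ _ i j, measurable (raw)] ztSel[OF _ _ _ i j, measurable (raw)]
  have m: "Zf i j \<in> borel_measurable OM" unfolding Zf_def OM_eq by measurable
  show ?thesis by (rule E_integrable[OF m]) (auto simp: Zf_def split: prod.splits intro: loss_abs)
qed

lemma main:
  assumes C1: "0 < C1" and C2: "0 < C2"
  shows
   "(\<integral>(mt, zt, v, u, w). pop_risk D mu loss w \<partial>fl_joint D mu Zm Wm A K n)
      - (1 + C1) * (\<integral>(mt, zt, v, u, w). (1 / real K) * (\<Sum>i<K. risk (mu (mt (i, v i))) loss w)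
                     \<partial>fl_joint D mu Zm Wm A K n)
    = (2 + C1) / real K *
      (\<Sum>i<K. \<integral>(mt, zt, v, u, w).
          ((-1::real) ^ (1 - of_bool (v i)) - C1 / (C1 + 2))
          * loss w (zt (i, False, 0, \<not> u (i, False, 0)))
        \<partial>fl_joint D mu Zm Wm A K n)
   \<and>
   (\<integral>(mt, zt, v, u, w). (1 / real K) * (\<Sum>i<K. risk (mu (mt (i, v i))) loss w)
                     \<partial>fl_joint D mu Zm Wm A K n)
      - (1 + C2) * (\<integral>(mt, zt, v, u, w). emp_risk K n loss (sample_of K n zt v u) w
                     \<partial>fl_joint D mu Zm Wm A K n)
    = (2 + C2) / (real K * real n) *
      (\<Sum>i<K. \<Sum>j<n. \<integral>(mt, zt, v, u, w).
          ((-1::real) ^ (1 - of_bool (u (i, v i, j))) - C2 / (C2 + 2))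
          * loss w (zt (i, v i, j, False))
        \<partial>fl_joint D mu Zm Wm A K n)"
proof -
  define pp where "pp = EE (\<lambda>(mt, zt, v, u, w). pop_risk D mu loss w)"
  have K0: "0 < real K" using Kpos by simp
  have n0: "0 < real n" using npos by simp
  have avg: "(\<lambda>(mt, zt, v, u, w). (1 / real K) * (\<Sum>i<K. risk (mu (mt (i, v i))) loss w)) = (\<lambda>x. (1 / real K) * (\<Sum>i<K. ri i x))"
    by (rule ext) (auto simp: ri_def split: prod.splits)
  have Eavg: "EE (\<lambda>(mt, zt, v, u, w). (1 / real K) * (\<Sum>i<K. risk (mu (mt (i, v i))) loss w)) = (1 / real K) * (\<Sum>i<K. EE (ri i))"
    unfolding avg by (simp add: Bochner_Integration.integral_sum ri_int)
  have emp: "(\<lambda>(mt, zt, v, u, w). emp_risk K n loss (sample_of K n zt v u) w) = (\<lambda>x. (1 / (real K * real n)) * (\<Sum>i<K. \<Sum>j<n. Zf i j x))"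
    by (rule ext) (auto simp: Zf_def emp_risk_def sample_of_def sIdx_def split: prod.splits intro!: sum.cong)
  have Eemp: "EE (\<lambda>(mt, zt, v, u, w). emp_risk K n loss (sample_of K n zt v u) w) = (1 / (real K * real n)) * (\<Sum>i<K. \<Sum>j<n. EE (Zf i j))"
  proof -
    have "EE (\<lambda>x. \<Sum>i<K. \<Sum>j<n. Zf i j x) = (\<Sum>i<K. EE (\<lambda>x. \<Sum>j<n. Zf i j x))"
      by (rule Bochner_Integration.integral_sum) (auto intro!: Bochner_Integration.integrable_sum Zf_int)
    also have "\<dots> = (\<Sum>i<K. \<Sum>j<n. EE (Zf i j))"
      by (rule sum.cong[OF refl], rule Bochner_Integration.integral_sum) (auto intro: Zf_int)
    finally show ?thesis unfolding emp by simp
  qed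
  have p1: "(2 + C1) * EE (\<lambda>(mt,zt,v,u,w). ((-1::real) ^ (1 - of_bool (v i)) - C1 / (C1 + 2)) * loss w (zt (i, False, 0, \<not> u (i, False, 0))))
    = pp - (1 + C1) * EE (ri i)" if "i < K" for i
    using part1_i[OF that C1] unfolding pp_def ri_def .
  have p2: "(2 + C2) * EE (\<lambda>(mt,zt,v,u,w). ((-1::real) ^ (1 - of_bool (u (i, v i, j))) - C2 / (C2 + 2)) * loss w (zt (i, v i, j, False)))
    = EE (ri i) - (1 + C2) * EE (Zf i j)" if "i < K" "j < n" for i j
    using part2_ij[OF that C2] unfolding ri_def Zf_def .
  have R1: "(2 + C1) / real K *
      (\<Sum>i<K. EE (\<lambda>(mt,zt,v,u,w). ((-1::real) ^ (1 - of_bool (v i)) - C1 / (C1 + 2)) * loss w (zt (i, False, 0, \<not> u (i, False, 0)))))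
      = (1 / real K) * (\<Sum>i<K. pp - (1 + C1) * EE (ri i))" (is "?L = _")
  proof -
    have "?L = (1 / real K) * (\<Sum>i<K. (2 + C1) * EE (\<lambda>(mt,zt,v,u,w). ((-1::real) ^ (1 - of_bool (v i)) - C1 / (C1 + 2)) * loss w (zt (i, False, 0, \<not> u (i, False, 0)))))"
      by (simp add: sum_distrib_left[symmetric])
    also have "\<dots> = (1 / real K) * (\<Sum>i<K. pp - (1 + C1) * EE (ri i))"
      by (intro arg_cong[where f="\<lambda>s. (1 / real K) * s"] sum.cong refl p1) simp
    finally show ?thesis .
  qed
  have R2: "(2 + C2) / (real K * real n) *
      (\<Sum>i<K. \<Sum>j<n. EE (\<lambda>(mt,zt,v,u,w). ((-1::real) ^ (1 - of_bool (u (i, v i, j))) - C2 / (C2 + 2)) * loss w (zt (i, v i, j, False))))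
      = (1 / (real K * real n)) * (\<Sum>i<K. \<Sum>j<n. EE (ri i) - (1 + C2) * EE (Zf i j))" (is "?L = _")
  proof -
    have "?L = (1 / (real K * real n)) * (\<Sum>i<K. \<Sum>j<n. (2 + C2) * EE (\<lambda>(mt,zt,v,u,w). ((-1::real) ^ (1 - of_bool (u (i, v i, j))) - C2 / (C2 + 2)) * loss w (zt (i, v i, j, False))))"
      by (simp add: sum_distrib_left[symmetric])
    also have "\<dots> = (1 / (real K * real n)) * (\<Sum>i<K. \<Sum>j<n. EE (ri i) - (1 + C2) * EE (Zf i j))"
      by (intro arg_cong[where f="\<lambda>s. (1 / (real K * real n)) * s"] sum.cong refl p2) simp_all
    finally show ?thesis .
  qed
  show ?thesis
    unfolding Eavg Eemp pp_def[symmetric] R1 R2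
    using K0 n0
    by (simp add: sum_subtractf sum_distrib_left[symmetric] field_simps) (simp add: sum.distrib sum_distrib_left)
qed

end


theorem mainTheorem10:
  fixes D :: "'c measure" and mu :: "'c \<Rightarrow> 'z measure" and Zm :: "'z measure"
    and Wm :: "'w measure" and A :: "(nat \<times> nat \<Rightarrow> 'z) \<Rightarrow> 'w measure"
    and loss :: "'w \<Rightarrow> 'z \<Rightarrow> real" and K n :: nat and C1 C2 :: real
  assumes "prob_space D"
    and "mu \<in> D \<rightarrow>\<^sub>M prob_algebra Zm"
    and "A \<in> PiM (sIdx K n) (\<lambda>_. Zm) \<rightarrow>\<^sub>M prob_algebra Wm"
    and "case_prod loss \<in> borel_measurable (Wm \<Otimes>\<^sub>M Zm)"
    and "\<forall>w z. 0 \<le> loss w z"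
    and "\<exists>B. \<forall>w z. loss w z \<le> B"
    and "0 < K" and "0 < n"
    and "0 < C1" and "0 < C2"
  shows
   "(\<integral>(mt, zt, v, u, w). pop_risk D mu loss w \<partial>fl_joint D mu Zm Wm A K n)
      - (1 + C1) * (\<integral>(mt, zt, v, u, w). (1 / real K) * (\<Sum>i<K. risk (mu (mt (i, v i))) loss w)
                     \<partial>fl_joint D mu Zm Wm A K n)
    = (2 + C1) / real K *
      (\<Sum>i<K. \<integral>(mt, zt, v, u, w).
          ((-1::real) ^ (1 - of_bool (v i)) - C1 / (C1 + 2))
          * loss w (zt (i, False, 0, \<not> u (i, False, 0)))
        \<partial>fl_joint D mu Zm Wm A K n)
   \<and>
   (\<integral>(mt, zt, v, u, w). (1 / real K) * (\<Sum>i<K. risk (mu (mt (i, v i))) loss w)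
                     \<partial>fl_joint D mu Zm Wm A K n)
      - (1 + C2) * (\<integral>(mt, zt, v, u, w). emp_risk K n loss (sample_of K n zt v u) w
                     \<partial>fl_joint D mu Zm Wm A K n)
    = (2 + C2) / (real K * real n) *
      (\<Sum>i<K. \<Sum>j<n. \<integral>(mt, zt, v, u, w).
          ((-1::real) ^ (1 - of_bool (u (i, v i, j))) - C2 / (C2 + 2))
          * loss w (zt (i, v i, j, False))
        \<partial>fl_joint D mu Zm Wm A K n)"
proof -
  from assms(6) obtain B where bnd: "\<forall>w z. loss w z \<le> B" by blast
  have fl: "fl D mu Zm Wm A loss K n B"
    unfolding fl_def using assms(1-5,7,8) bnd by blast
  interpret fl D mu Zm Wm A loss K n B by (rule fl)
  show ?thesis by (rule main[OF assms(9) assms(10)])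
qed

end
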